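(* Let $(B,\mathfrak{m})$ be a deformation base, $X$ a vector space and $M\subseteq B\widehat{\otimes}X$ a quasi-flat and pseudoclosed $B$-submodule. Let $\varphi:\pi(M)\to M$ be a linear section of the projection $\pi|_M:M\to\pi(M)$. Then the $B$-linear extension $\varphi:B\widehat{\otimes}\pi(M)\to M$ is a $B$-linear isomorphism.
   Context: Deformation base: complete local Noetherian unital $\mathbb{C}$-algebra $B$ with maximal ideal $\mathfrak{m}$, $B/\mathfrak{m}=\mathbb{C}$. $B\widehat{\otimes}X=\varprojlim(B/\mathfrak{m}^k\otimes X)$, $\pi:B\widehat{\otimes}X\to X$ the canonical projection, $\mathfrak{m}X$ the image of $\mathfrak{m}\widehat{\otimes}X$. The $B$-linear extension sends $\sum_ib_iy_i\mapsto\sum_ib_i\varphi(y_i)$. For $Y\subseteq B\widehat{\otimes}X$: $BY=\{\sum_ib_iy_i:y_i\in Y,b_i\in\mathfrak{m}^{k_i},k_i\to\infty\}$, $\mathfrak{m}Y$ the same with $k_i\ge1$. $M$ is pseudoclosed if $BM\subseteq M$, quasi-flat if $M\cap\mathfrak{m}X\subseteq\mathfrak{m}M$. *)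

theory Defs
  imports Complex_Main
begin

definition is_ideal :: "'b::comm_ring_1 set \<Rightarrow> bool" where
  "is_ideal I \<longleftrightarrow> 0 \<in> I \<and> (\<forall>x\<in>I. \<forall>y\<in>I. x + y \<in> I) \<and> (\<forall>r. \<forall>x\<in>I. r * x \<in> I)"

definition ideal_gen :: "'b::comm_ring_1 set \<Rightarrow> 'b set" where
  "ideal_gen S = {x. \<exists>F r. finite F \<and> F \<subseteq> S \<and> x = (\<Sum>f\<in>F. r f * f)}"

fun mpow :: "'b::comm_ring_1 set \<Rightarrow> nat \<Rightarrow> 'b set" where
  "mpow m 0 = UNIV"
| "mpow m (Suc k) = ideal_gen {a * b | a b. a \<in> m \<and> b \<in> mpow m k}"

definition deformation_base :: "(complex \<Rightarrow> 'b::comm_ring_1) \<Rightarrow> 'b set \<Rightarrow> bool" where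
  "deformation_base \<iota> m \<longleftrightarrow>
     \<comment> \<open>unital C-algebra structure\<close>
     \<iota> 1 = 1 \<and> (\<forall>c d. \<iota> (c + d) = \<iota> c + \<iota> d) \<and> (\<forall>c d. \<iota> (c * d) = \<iota> c * \<iota> d)
     \<comment> \<open>local ring with maximal ideal m\<close>
   \<and> is_ideal m \<and> m \<noteq> UNIV \<and> (\<forall>I. is_ideal I \<and> I \<noteq> UNIV \<longrightarrow> I \<subseteq> m)
     \<comment> \<open>residue field B/m = C\<close>
   \<and> (\<forall>b. \<exists>c. b - \<iota> c \<in> m)
     \<comment> \<open>Noetherian\<close>
   \<and> (\<forall>I :: 'b::comm_ring_1 set. is_ideal I \<longrightarrow> (\<exists>F. finite F \<and> I = ideal_gen F))
     \<comment> \<open>complete (and separated) in the m-adic topology\<close>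
   \<and> (\<Inter>k. mpow m k) = {0}
   \<and> (\<forall>x. (\<forall>K. \<exists>N::nat. \<forall>p\<ge>N. \<forall>q\<ge>N. x p - x q \<in> mpow m K)
        \<longrightarrow> (\<exists>y. \<forall>K. \<exists>N::nat. \<forall>p\<ge>N. x p - y \<in> mpow m K))"

text \<open>Continuous dual of B: C-linear functionals vanishing on some m^k.
  It is the direct limit of the duals of the finite-dimensional algebras B/m^k.\<close>
definition Bdual :: "(complex \<Rightarrow> 'b::comm_ring_1) \<Rightarrow> 'b set \<Rightarrow> ('b \<Rightarrow> complex) set" where
  "Bdual \<iota> m = {l. (\<forall>a b. l (a + b) = l a + l b) \<and> (\<forall>c b. l (\<iota> c * b) = c * l b)
                  \<and> (\<exists>k. \<forall>b\<in>mpow m k. l b = 0)}"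

text \<open>Completed tensor product B \<widehat>\<otimes> X = lim (B/m^k \<otimes> X), realised canonically as
  Hom_C(Bdual, X) (since (B/m^k) \<otimes> X = Hom_C((B/m^k)^*, X) and the limit of Homs out of
  a direct system is Hom out of the direct limit).\<close>
definition ctens :: "(complex \<Rightarrow> 'b::comm_ring_1) \<Rightarrow> 'b set \<Rightarrow> (complex \<Rightarrow> 'x::ab_group_add \<Rightarrow> 'x)
     \<Rightarrow> (('b \<Rightarrow> complex) \<Rightarrow> 'x) set" where
  "ctens \<iota> m sc = {T. (\<forall>l\<in>Bdual \<iota> m. \<forall>l'\<in>Bdual \<iota> m. T (\<lambda>b. l b + l' b) = T l + T l')
                    \<and> (\<forall>c. \<forall>l\<in>Bdual \<iota> m. T (\<lambda>b. c * l b) = sc c (T l))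
                    \<and> (\<forall>l. l \<notin> Bdual \<iota> m \<longrightarrow> T l = 0)}"

text \<open>Action of b \<in> B on B \<widehat>\<otimes> X (corresponds to b \<otimes> 1).\<close>
definition Bact :: "(complex \<Rightarrow> 'b::comm_ring_1) \<Rightarrow> 'b set \<Rightarrow> 'b
     \<Rightarrow> (('b \<Rightarrow> complex) \<Rightarrow> 'x::zero) \<Rightarrow> (('b \<Rightarrow> complex) \<Rightarrow> 'x)" where
  "Bact \<iota> m b T = (\<lambda>l. if l \<in> Bdual \<iota> m then T (\<lambda>b'. l (b * b')) else 0)"

text \<open>Canonical map X \<rightarrow> B \<widehat>\<otimes> X, x \<mapsto> 1 \<otimes> x.\<close>
definition emb :: "(complex \<Rightarrow> 'b::comm_ring_1) \<Rightarrow> 'b set \<Rightarrow> (complex \<Rightarrow> 'x::zero \<Rightarrow> 'x)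
     \<Rightarrow> 'x \<Rightarrow> (('b \<Rightarrow> complex) \<Rightarrow> 'x)" where
  "emb \<iota> m sc x = (\<lambda>l. if l \<in> Bdual \<iota> m then sc (l 1) x else 0)"

definition resid :: "(complex \<Rightarrow> 'b::comm_ring_1) \<Rightarrow> 'b set \<Rightarrow> 'b \<Rightarrow> complex" where
  "resid \<iota> m b = (THE c. b - \<iota> c \<in> m)"

definition proj :: "(complex \<Rightarrow> 'b::comm_ring_1) \<Rightarrow> 'b set \<Rightarrow> (('b \<Rightarrow> complex) \<Rightarrow> 'x) \<Rightarrow> 'x" where
  "proj \<iota> m T = T (resid \<iota> m)"

text \<open>The m-adically convergent sum  \<Sum>_i b_i y_i  in B \<widehat>\<otimes> X (evaluated at each functional,
  only finitely many terms are nonzero when b_i \<in> m^{k_i}, k_i \<rightarrow> \<infinity>).\<close>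
definition csum :: "(complex \<Rightarrow> 'b::comm_ring_1) \<Rightarrow> 'b set \<Rightarrow> (nat \<Rightarrow> 'b)
     \<Rightarrow> (nat \<Rightarrow> (('b \<Rightarrow> complex) \<Rightarrow> 'x::comm_monoid_add)) \<Rightarrow> (('b \<Rightarrow> complex) \<Rightarrow> 'x)" where
  "csum \<iota> m b y = (\<lambda>l. if l \<in> Bdual \<iota> m then
        (\<Sum>i\<in>{i. (\<lambda>b'. l (b i * b')) \<noteq> (\<lambda>_. 0)}. y i (\<lambda>b'. l (b i * b'))) else 0)"

definition adm :: "'b::comm_ring_1 set \<Rightarrow> nat \<Rightarrow> (nat \<Rightarrow> 'b) \<Rightarrow> bool" where
  "adm m j b \<longleftrightarrow> (\<exists>k :: nat \<Rightarrow> nat. filterlim k at_top sequentially \<and> (\<forall>i. j \<le> k i \<and> b i \<in> mpow m (k i)))"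

definition BY :: "(complex \<Rightarrow> 'b::comm_ring_1) \<Rightarrow> 'b set \<Rightarrow> (('b \<Rightarrow> complex) \<Rightarrow> 'x::comm_monoid_add) set
     \<Rightarrow> (('b \<Rightarrow> complex) \<Rightarrow> 'x) set" where
  "BY \<iota> m Y = {csum \<iota> m b y | b y. adm m 0 b \<and> (\<forall>i. y i \<in> Y)}"

definition mY :: "(complex \<Rightarrow> 'b::comm_ring_1) \<Rightarrow> 'b set \<Rightarrow> (('b \<Rightarrow> complex) \<Rightarrow> 'x::comm_monoid_add) set
     \<Rightarrow> (('b \<Rightarrow> complex) \<Rightarrow> 'x) set" where
  "mY \<iota> m Y = {csum \<iota> m b y | b y. adm m 1 b \<and> (\<forall>i. y i \<in> Y)}"

definition mX :: "(complex \<Rightarrow> 'b::comm_ring_1) \<Rightarrow> 'b set \<Rightarrow> (complex \<Rightarrow> 'x::comm_monoid_add \<Rightarrow> 'x)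
     \<Rightarrow> (('b \<Rightarrow> complex) \<Rightarrow> 'x) set" where
  "mX \<iota> m sc = mY \<iota> m (range (emb \<iota> m sc))"

definition B_submodule :: "(complex \<Rightarrow> 'b::comm_ring_1) \<Rightarrow> 'b set \<Rightarrow> (complex \<Rightarrow> 'x::ab_group_add \<Rightarrow> 'x)
     \<Rightarrow> (('b \<Rightarrow> complex) \<Rightarrow> 'x) set \<Rightarrow> bool" where
  "B_submodule \<iota> m sc M \<longleftrightarrow> M \<subseteq> ctens \<iota> m sc \<and> (\<lambda>_. 0) \<in> M
     \<and> (\<forall>T\<in>M. \<forall>S\<in>M. (\<lambda>l. T l + S l) \<in> M) \<and> (\<forall>b. \<forall>T\<in>M. Bact \<iota> m b T \<in> M)"

definition pseudoclosed :: "(complex \<Rightarrow> 'b::comm_ring_1) \<Rightarrow> 'b set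
     \<Rightarrow> (('b \<Rightarrow> complex) \<Rightarrow> 'x::comm_monoid_add) set \<Rightarrow> bool" where
  "pseudoclosed \<iota> m M \<longleftrightarrow> BY \<iota> m M \<subseteq> M"

definition quasi_flat :: "(complex \<Rightarrow> 'b::comm_ring_1) \<Rightarrow> 'b set \<Rightarrow> (complex \<Rightarrow> 'x::comm_monoid_add \<Rightarrow> 'x)
     \<Rightarrow> (('b \<Rightarrow> complex) \<Rightarrow> 'x) set \<Rightarrow> bool" where
  "quasi_flat \<iota> m sc M \<longleftrightarrow> M \<inter> mX \<iota> m sc \<subseteq> mY \<iota> m M"

definition ctens_sub :: "(complex \<Rightarrow> 'b::comm_ring_1) \<Rightarrow> 'b set \<Rightarrow> (complex \<Rightarrow> 'x::ab_group_add \<Rightarrow> 'x)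
     \<Rightarrow> 'x set \<Rightarrow> (('b \<Rightarrow> complex) \<Rightarrow> 'x) set" where
  "ctens_sub \<iota> m sc V = {T \<in> ctens \<iota> m sc. \<forall>l. T l \<in> V}"

end

theory Submission
  imports Defs
begin


lemma ideal_sum:
  assumes "is_ideal I" "finite A" "\<forall>a\<in>A. f a \<in> I"
  shows "sum f A \<in> I"
  using assms(2,3)
proof (induction A rule: finite_induct)
  case empty then show ?case using assms(1) by (simp add: is_ideal_def)
next
  case (insert x F) then show ?case using assms(1) by (simp add: is_ideal_def)
qed

lemma ideal_mult: "is_ideal I \<Longrightarrow> x \<in> I \<Longrightarrow> r * x \<in> I"
  by (simp add: is_ideal_def)
lemma ideal_mult2: "is_ideal I \<Longrightarrow> x \<in> I \<Longrightarrow> x * r \<in> I"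
  by (simp add: is_ideal_def mult.commute)
lemma ideal_add: "is_ideal I \<Longrightarrow> x \<in> I \<Longrightarrow> y \<in> I \<Longrightarrow> x + y \<in> I"
  by (simp add: is_ideal_def)
lemma ideal_zero: "is_ideal I \<Longrightarrow> 0 \<in> I"
  by (simp add: is_ideal_def)
lemma ideal_neg: "is_ideal I \<Longrightarrow> x \<in> I \<Longrightarrow> - x \<in> I"
  using ideal_mult[of I x "-1"] by simp
lemma ideal_diff: "is_ideal I \<Longrightarrow> x \<in> I \<Longrightarrow> y \<in> I \<Longrightarrow> x - y \<in> I"
  using ideal_add[of I x "-y"] ideal_neg[of I y] by simp

lemma ideal_gen_ideal: "is_ideal (ideal_gen S)"
  unfolding is_ideal_def
proof (intro conjI ballI allI)
  show "0 \<in> ideal_gen S" unfolding ideal_gen_def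
    by (rule CollectI, rule exI[of _ "{}"]) auto
next
  fix x y assume x: "x \<in> ideal_gen S" and y: "y \<in> ideal_gen S"
  then obtain F r G s where F: "finite F" "F \<subseteq> S" "x = (\<Sum>f\<in>F. r f * f)"
    and G: "finite G" "G \<subseteq> S" "y = (\<Sum>f\<in>G. s f * f)"
    unfolding ideal_gen_def by blast
  define t where "t f = (if f \<in> F then r f else 0) + (if f \<in> G then s f else 0)" for f
  have "(\<Sum>f\<in>F \<union> G. t f * f) = (\<Sum>f\<in>F \<union> G. (if f \<in> F then r f * f else 0))
        + (\<Sum>f\<in>F \<union> G. (if f \<in> G then s f * f else 0))"
    by (subst sum.distrib[symmetric], rule sum.cong) (simp_all add: t_def distrib_right)
  also have "(\<Sum>f\<in>F \<union> G. (if f \<in> F then r f * f else 0)) = (\<Sum>f\<in>F. r f * f)"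
    using sum.inter_restrict[of "F \<union> G" "\<lambda>f. r f * f" F] F G by (simp add: Int_absorb2)
  also have "(\<Sum>f\<in>F \<union> G. (if f \<in> G then s f * f else 0)) = (\<Sum>f\<in>G. s f * f)"
    using sum.inter_restrict[of "F \<union> G" "\<lambda>f. s f * f" G] F G by (simp add: Int_absorb2)
  finally show "x + y \<in> ideal_gen S" unfolding ideal_gen_def using F G
    by (intro CollectI exI[of _ "F \<union> G"] exI[of _ t]) auto
next
  fix r x assume "x \<in> ideal_gen S"
  then obtain F s where F: "finite F" "F \<subseteq> S" "x = (\<Sum>f\<in>F. s f * f)"
    unfolding ideal_gen_def by blast
  then show "r * x \<in> ideal_gen S" unfolding ideal_gen_def
    by (intro CollectI exI[of _ F] exI[of _ "\<lambda>f. r * s f"]) (auto simp: sum_distrib_left mult.assoc)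
qed

lemma gen_in: "s \<in> S \<Longrightarrow> s \<in> ideal_gen S"
  unfolding ideal_gen_def by (intro CollectI exI[of _ "{s}"] exI[of _ "\<lambda>_. 1"]) auto

lemma ideal_gen_subset: "is_ideal I \<Longrightarrow> S \<subseteq> I \<Longrightarrow> ideal_gen S \<subseteq> I"
  unfolding ideal_gen_def
  by (auto intro!: ideal_sum ideal_mult)

lemma mpow_ideal: "is_ideal (mpow m k)"
proof (cases k)
  case 0 then show ?thesis by (simp add: is_ideal_def)
next
  case (Suc n) then show ?thesis by (simp only: mpow.simps ideal_gen_ideal)
qed

lemma mpow_Suc_sub: "mpow m (Suc k) \<subseteq> mpow m k"
  by (simp only: mpow.simps, rule ideal_gen_subset[OF mpow_ideal]) (auto intro: ideal_mult[OF mpow_ideal])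

lemma mpow_antimono: "k \<le> k' \<Longrightarrow> mpow m k' \<subseteq> mpow m k"
  by (induction k' rule: dec_induct) (use mpow_Suc_sub in auto)

lemma mpow_mult: "a \<in> m \<Longrightarrow> b \<in> mpow m k \<Longrightarrow> a * b \<in> mpow m (Suc k)"
  by (auto intro!: gen_in)

lemma mpow1: "is_ideal m \<Longrightarrow> mpow m 1 = m"
proof
  assume "is_ideal m"
  then show "mpow m 1 \<subseteq> m"
    by (simp, intro ideal_gen_subset) (auto intro: ideal_mult2)
  show "m \<subseteq> mpow m 1"
    by (auto intro!: gen_in) (metis mult.right_neutral)
qed


definition Dk :: "(complex \<Rightarrow> 'b::comm_ring_1) \<Rightarrow> 'b set \<Rightarrow> nat \<Rightarrow> ('b \<Rightarrow> complex) set" where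
  "Dk \<iota> m K = {l \<in> Bdual \<iota> m. \<forall>b\<in>mpow m K. l b = 0}"

definition mul :: "'b::comm_ring_1 \<Rightarrow> ('b \<Rightarrow> complex) \<Rightarrow> ('b \<Rightarrow> complex)" where
  "mul a l = (\<lambda>b. l (a * b))"

lemma Bdual_add: "l \<in> Bdual \<iota> m \<Longrightarrow> l (a + b) = l a + l b"
  by (simp add: Bdual_def)
lemma Bdual_scale: "l \<in> Bdual \<iota> m \<Longrightarrow> l (\<iota> c * b) = c * l b"
  by (simp add: Bdual_def)
lemma Bdual_zero: "l \<in> Bdual \<iota> m \<Longrightarrow> l 0 = 0"
  using Bdual_add[of l \<iota> m 0 0] by simp
lemma Bdual_neg: "l \<in> Bdual \<iota> m \<Longrightarrow> l (- a) = - l a"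
  using Bdual_add[of l \<iota> m a "-a"] Bdual_zero[of l \<iota> m] by (simp add: add_eq_0_iff)
lemma Bdual_diff: "l \<in> Bdual \<iota> m \<Longrightarrow> l (a - b) = l a - l b"
  using Bdual_add[of l \<iota> m a "-b"] Bdual_neg[of l \<iota> m b] by simp
lemma Bdual_sum: "l \<in> Bdual \<iota> m \<Longrightarrow> l (sum f A) = (\<Sum>a\<in>A. l (f a))"
  by (induction A rule: infinite_finite_induct) (simp_all add: Bdual_zero Bdual_add)

lemma Dk_Bdual: "l \<in> Dk \<iota> m K \<Longrightarrow> l \<in> Bdual \<iota> m"
  by (simp add: Dk_def)
lemma Dk_van: "l \<in> Dk \<iota> m K \<Longrightarrow> b \<in> mpow m K \<Longrightarrow> l b = 0"
  by (simp add: Dk_def)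
lemma Dk_mono: "K \<le> K' \<Longrightarrow> l \<in> Dk \<iota> m K \<Longrightarrow> l \<in> Dk \<iota> m K'"
  using mpow_antimono[of K K' m] by (auto simp: Dk_def)
lemma Bdual_Dk: "l \<in> Bdual \<iota> m \<Longrightarrow> \<exists>K. l \<in> Dk \<iota> m K"
  by (auto simp: Dk_def Bdual_def)

lemma Dk_iff: "l \<in> Dk \<iota> m K \<longleftrightarrow> (\<forall>a b. l (a + b) = l a + l b) \<and> (\<forall>c b. l (\<iota> c * b) = c * l b)
   \<and> (\<forall>b\<in>mpow m K. l b = 0)"
  by (auto simp: Dk_def Bdual_def)

lemma Bdual_0: "(\<lambda>_. 0) \<in> Bdual \<iota> m"
  by (auto simp: Bdual_def)
lemma Dk_0: "(\<lambda>_. 0) \<in> Dk \<iota> m K"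
  by (auto simp: Dk_def Bdual_def)
lemma Dk_add: "l \<in> Dk \<iota> m K \<Longrightarrow> l' \<in> Dk \<iota> m K \<Longrightarrow> (\<lambda>b. l b + l' b) \<in> Dk \<iota> m K"
  unfolding Dk_iff by (auto simp: algebra_simps)
lemma Dk_scale: "l \<in> Dk \<iota> m K \<Longrightarrow> (\<lambda>b. c * l b) \<in> Dk \<iota> m K"
  unfolding Dk_iff by (auto simp: algebra_simps)
lemma Dk_sum: "(\<forall>a\<in>A. f a \<in> Dk \<iota> m K) \<Longrightarrow> (\<lambda>b. \<Sum>a\<in>A. f a b) \<in> Dk \<iota> m K"
proof (induction A rule: infinite_finite_induct)
  case (insert x F)
  then show ?case using Dk_add[of "f x" \<iota> m K "\<lambda>b. \<Sum>a\<in>F. f a b"] by simp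
qed (simp_all add: Dk_0)
lemma Dk_mul: "l \<in> Dk \<iota> m K \<Longrightarrow> mul a l \<in> Dk \<iota> m K"
  unfolding Dk_iff mul_def
proof (intro conjI allI ballI)
  assume l: "(\<forall>a b. l (a + b) = l a + l b) \<and> (\<forall>c b. l (\<iota> c * b) = c * l b) \<and> (\<forall>b\<in>mpow m K. l b = 0)"
  fix c b b'
  show "l (a * (b + b')) = l (a * b) + l (a * b')" using l by (simp add: distrib_left)
  have "a * (\<iota> c * b) = \<iota> c * (a * b)" by (simp add: mult.left_commute)
  then show "l (a * (\<iota> c * b)) = c * l (a * b)" using l by metis
next
  fix b assume l: "(\<forall>a b. l (a + b) = l a + l b) \<and> (\<forall>c b. l (\<iota> c * b) = c * l b) \<and> (\<forall>b\<in>mpow m K. l b = 0)"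
    and b: "b \<in> mpow m K"
  then show "l (a * b) = 0" using ideal_mult[OF mpow_ideal b, of a] by simp
qed

context
  fixes \<iota> :: "complex \<Rightarrow> 'b::comm_ring_1" and m :: "'b set"
  assumes base: "deformation_base \<iota> m"
begin

lemma iota_add: "\<iota> (c + d) = \<iota> c + \<iota> d" using base by (simp add: deformation_base_def)
lemma iota_mult: "\<iota> (c * d) = \<iota> c * \<iota> d" using base by (simp add: deformation_base_def)
lemma iota_one: "\<iota> 1 = 1" using base by (simp add: deformation_base_def)
lemma iota_zero: "\<iota> 0 = 0" using iota_add[of 0 0] by simp
lemma iota_neg: "\<iota> (- c) = - \<iota> c" using iota_add[of c "-c"] iota_zero by (simp add: add_eq_0_iff)
lemma iota_diff: "\<iota> (c - d) = \<iota> c - \<iota> d" using iota_add[of c "-d"] iota_neg[of d] by simp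
lemma m_ideal: "is_ideal m" using base by (simp add: deformation_base_def)
lemma m_proper: "1 \<notin> m"
proof
  assume "1 \<in> m"
  then have "\<forall>x. x \<in> m" using ideal_mult[OF m_ideal, of 1] by (metis mult.right_neutral)
  then show False using base by (auto simp: deformation_base_def)
qed
lemma resid_ex: "\<exists>c. b - \<iota> c \<in> m" using base by (simp add: deformation_base_def)
lemma resid_uniq: assumes "b - \<iota> c \<in> m" "b - \<iota> d \<in> m" shows "c = d"
proof (rule ccontr)
  assume ne: "c \<noteq> d"
  have "(b - \<iota> c) - (b - \<iota> d) \<in> m" by (rule ideal_diff[OF m_ideal assms])
  then have "\<iota> (d - c) \<in> m" by (simp add: iota_diff)
  then have "\<iota> (1 / (d - c)) * \<iota> (d - c) \<in> m" by (rule ideal_mult[OF m_ideal])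
  then have "\<iota> 1 \<in> m" using ne by (simp add: iota_mult[symmetric])
  then show False using m_proper iota_one by simp
qed
lemma resid: "b - \<iota> (resid \<iota> m b) \<in> m"
  unfolding resid_def using resid_ex[of b] resid_uniq[of b] by (metis theI)
lemma resid_eq: "b - \<iota> c \<in> m \<Longrightarrow> resid \<iota> m b = c"
  using resid resid_uniq by blast
lemma resid_one: "resid \<iota> m 1 = 1"
  by (rule resid_eq) (simp add: iota_one ideal_zero[OF m_ideal])

lemma resid_Dk1: "resid \<iota> m \<in> Dk \<iota> m 1"
  unfolding Dk_iff
proof (intro conjI allI ballI)
  fix a b
  show "resid \<iota> m (a + b) = resid \<iota> m a + resid \<iota> m b"
    by (rule resid_eq) (metis (no_types, lifting) add_diff_add ideal_add iota_add m_ideal resid)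
  fix c
  show "resid \<iota> m (\<iota> c * b) = c * resid \<iota> m b"
    by (rule resid_eq) (metis ideal_mult iota_mult m_ideal resid right_diff_distrib)
next
  fix b assume "b \<in> mpow m 1"
  then show "resid \<iota> m b = 0" using mpow1[OF m_ideal] by (intro resid_eq) (simp add: iota_zero)
qed

lemma Dk1_form: assumes "l \<in> Dk \<iota> m 1" shows "l = (\<lambda>b. l 1 * resid \<iota> m b)"
proof
  fix b
  have "b = \<iota> (resid \<iota> m b) * 1 + (b - \<iota> (resid \<iota> m b))" by simp
  then have "l b = l (\<iota> (resid \<iota> m b) * 1) + l (b - \<iota> (resid \<iota> m b))"
    using Bdual_add[OF Dk_Bdual[OF assms]] by metis
  also have "l (b - \<iota> (resid \<iota> m b)) = 0"
    using Dk_van[OF assms] resid[of b] mpow1[OF m_ideal] by simp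
  moreover have "l (\<iota> (resid \<iota> m b) * 1) = resid \<iota> m b * l 1"
    by (rule Bdual_scale[OF Dk_Bdual[OF assms]])
  ultimately show "l b = l 1 * resid \<iota> m b" by simp
qed

lemma Dk0_form: assumes "l \<in> Dk \<iota> m 0" shows "l = (\<lambda>_. 0)"
  using assms by (auto simp: Dk_def)

lemma mul_Dk_down: assumes "a \<in> m" "l \<in> Dk \<iota> m (Suc K)" shows "mul a l \<in> Dk \<iota> m K"
proof -
  have "mul a l \<in> Bdual \<iota> m" using Dk_mul[OF assms(2)] Dk_Bdual by blast
  moreover have "\<forall>b\<in>mpow m K. mul a l b = 0"
    using assms mpow_mult[OF assms(1)] by (auto simp: mul_def Dk_def)
  ultimately show ?thesis by (simp add: Dk_def)
qed

lemma mul_Dk_1: assumes "a \<in> mpow m K" "l \<in> Dk \<iota> m (Suc K)" shows "mul a l \<in> Dk \<iota> m 1"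
proof -
  have "mul a l \<in> Bdual \<iota> m" using Dk_mul[OF assms(2)] Dk_Bdual by blast
  moreover have "\<forall>b\<in>mpow m 1. mul a l b = 0"
  proof
    fix b assume "b \<in> mpow m 1"
    then have "b * a \<in> mpow m (Suc K)" using mpow1[OF m_ideal] mpow_mult[OF _ assms(1)] by simp
    then show "mul a l b = 0" using assms(2) by (simp add: mul_def Dk_def mult.commute)
  qed
  ultimately show ?thesis by (simp add: Dk_def)
qed

end


definition Inv :: "(complex \<Rightarrow> 'b::comm_ring_1) \<Rightarrow> 'b set \<Rightarrow> nat \<Rightarrow> nat \<Rightarrow> (nat \<Rightarrow> 'b) \<Rightarrow> (nat \<Rightarrow> 'b \<Rightarrow> complex) \<Rightarrow> bool" where
  "Inv \<iota> m K n e es \<longleftrightarrow> (\<forall>i<n. es i \<in> Dk \<iota> m K) \<and> (\<forall>b. b - (\<Sum>i<n. \<iota> (es i b) * e i) \<in> mpow m K)"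

context
  fixes \<iota> :: "complex \<Rightarrow> 'b::comm_ring_1" and m :: "'b set"
  assumes base: "deformation_base \<iota> m"
begin

lemma bvs: "vector_space (\<lambda>c b. \<iota> c * b)"
proof (unfold_locales)
  fix a b :: complex and x y :: 'b
  show "\<iota> a * (x + y) = \<iota> a * x + \<iota> a * y" by (simp add: distrib_left)
  show "\<iota> (a + b) * x = \<iota> a * x + \<iota> b * x" by (simp add: iota_add[OF base] distrib_right)
  show "\<iota> a * (\<iota> b * x) = \<iota> (a * b) * x" by (simp add: iota_mult[OF base] mult.assoc)
  show "\<iota> 1 * x = x" by (simp add: iota_one[OF base])
qed

lemma span_mod:
  assumes F: "finite F" "mpow m K = ideal_gen F"
  shows "\<exists>c. x \<in> mpow m K \<longrightarrow> x - (\<Sum>f\<in>F. \<iota> (c f) * f) \<in> mpow m (Suc K)"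
proof (cases "x \<in> mpow m K")
  case True
  then obtain F' r where F': "finite F'" "F' \<subseteq> F" "x = (\<Sum>f\<in>F'. r f * f)"
    using True unfolding F(2) ideal_gen_def by (auto simp only: mem_Collect_eq)
  define r' where "r' f = (if f \<in> F' then r f else 0)" for f
  have x: "x = (\<Sum>f\<in>F. r' f * f)"
    unfolding F'(3) r'_def using F'(2) F(1)
    by (intro sum.mono_neutral_cong_left) simp_all
  define c where "c f = resid \<iota> m (r' f)" for f
  have "x - (\<Sum>f\<in>F. \<iota> (c f) * f) = (\<Sum>f\<in>F. (r' f - \<iota> (c f)) * f)"
    unfolding x by (simp only: sum_subtractf[symmetric] left_diff_distrib)
  also have "\<dots> \<in> mpow m (Suc K)"
  proof (rule ideal_sum[OF mpow_ideal F(1)], intro ballI)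
    fix f assume "f \<in> F"
    then have "f \<in> mpow m K" unfolding F(2) by (rule gen_in)
    then show "(r' f - \<iota> (c f)) * f \<in> mpow m (Suc K)"
      unfolding c_def by (rule mpow_mult[OF resid[OF base]])
  qed
  finally show ?thesis by (intro exI[of _ c] impI)
qed simp

lemma step:
  assumes inv: "Inv \<iota> m K n e es"
  shows "\<exists>n' e' es'. n < n' \<and> (\<forall>i<n. e' i = e i \<and> es' i = es i)
     \<and> (\<forall>i. n \<le> i \<longrightarrow> i < n' \<longrightarrow> e' i \<in> mpow m K) \<and> Inv \<iota> m (Suc K) n' e' es'"
proof -
  interpret V: vector_space "\<lambda>c b. \<iota> c * b" by (rule bvs)
  have "\<forall>I::'b set. is_ideal I \<longrightarrow> (\<exists>F. finite F \<and> I = ideal_gen F)"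
    using base by (simp add: deformation_base_def)
  then obtain F where F: "finite F" "mpow m K = ideal_gen F"
    using mpow_ideal by blast
  have FK: "F \<subseteq> mpow m K" unfolding F(2) by (auto intro: gen_in)
  define W where "W = mpow m (Suc K)"
  have WK: "W \<subseteq> mpow m K" unfolding W_def by (rule mpow_Suc_sub)
  have subW: "V.subspace W"
    unfolding V.subspace_def W_def
    by (intro conjI ballI allI ideal_zero[OF mpow_ideal] ideal_add[OF mpow_ideal] ideal_mult[OF mpow_ideal])
  obtain Bm where "{} \<subseteq> Bm" and Bm: "Bm \<subseteq> W" "V.independent Bm" "W \<subseteq> V.span Bm"
    by (rule V.maximal_independent_subset_extend[OF empty_subsetI V.independent_empty])
  have spanBm: "V.span Bm \<subseteq> W" using V.span_minimal[OF Bm(1) subW] .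
  obtain Bas where Bas: "Bm \<subseteq> Bas" "Bas \<subseteq> Bm \<union> F" "V.independent Bas" "Bm \<union> F \<subseteq> V.span Bas"
    by (rule V.maximal_independent_subset_extend[OF Un_upper1 Bm(2)])
  define G where "G = Bas - Bm"
  have G: "finite G" "G \<subseteq> mpow m K" "G \<subseteq> Bas" "G \<inter> Bm = {}"
    using Bas(2) F(1) FK unfolding G_def by (auto intro: finite_subset)
  have mK_span: "mpow m K \<subseteq> V.span Bas"
  proof
    fix x assume x: "x \<in> mpow m K"
    obtain c where c0: "x \<in> mpow m K \<longrightarrow> x - (\<Sum>f\<in>F. \<iota> (c f) * f) \<in> mpow m (Suc K)"
      using span_mod[OF F, of x] by (elim exE)
    have c: "x - (\<Sum>f\<in>F. \<iota> (c f) * f) \<in> W" unfolding W_def using c0 x by (rule mp)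
    have "x - (\<Sum>f\<in>F. \<iota> (c f) * f) \<in> V.span Bm" using Bm(3) c by (rule subsetD)
    then have "x - (\<Sum>f\<in>F. \<iota> (c f) * f) \<in> V.span Bas"
      by (rule subsetD[OF V.span_mono[OF Bas(1)]])
    moreover have "(\<Sum>f\<in>F. \<iota> (c f) * f) \<in> V.span Bas"
      using Bas(4) by (intro V.span_sum V.span_scale) auto
    ultimately have "(x - (\<Sum>f\<in>F. \<iota> (c f) * f)) + (\<Sum>f\<in>F. \<iota> (c f) * f) \<in> V.span Bas"
      by (rule V.span_add)
    then show "x \<in> V.span Bas" by simp
  qed
  define r where "r b = b - (\<Sum>i<n. \<iota> (es i b) * e i)" for b
  have es_D: "\<And>i. i < n \<Longrightarrow> es i \<in> Dk \<iota> m K" using inv by (simp add: Inv_def)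
  have r_in: "r b \<in> V.span Bas" for b
  proof -
    have "r b \<in> mpow m K" using inv unfolding Inv_def r_def by (elim conjE) (erule allE)
    then show ?thesis by (rule subsetD[OF mK_span])
  qed
  have r_add: "r (a + b) = r a + r b" for a b
  proof -
    have "(\<Sum>i<n. \<iota> (es i (a + b)) * e i) = (\<Sum>i<n. \<iota> (es i a) * e i) + (\<Sum>i<n. \<iota> (es i b) * e i)"
      by (subst sum.distrib[symmetric], rule sum.cong)
         (simp_all add: Bdual_add[OF Dk_Bdual[OF es_D]] iota_add[OF base] distrib_right)
    then show ?thesis unfolding r_def by (simp add: algebra_simps)
  qed
  have r_scale: "r (\<iota> c * b) = \<iota> c * r b" for c b
  proof -
    have "(\<Sum>i<n. \<iota> (es i (\<iota> c * b)) * e i) = \<iota> c * (\<Sum>i<n. \<iota> (es i b) * e i)"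
      unfolding sum_distrib_left
    proof (rule sum.cong[OF refl])
      fix i assume "i \<in> {..<n}"
      then have "es i (\<iota> c * b) = c * es i b" using Bdual_scale[OF Dk_Bdual[OF es_D]] by simp
      then have "\<iota> (es i (\<iota> c * b)) = \<iota> c * \<iota> (es i b)" using iota_mult[OF base] by simp
      then show "\<iota> (es i (\<iota> c * b)) * e i = \<iota> c * (\<iota> (es i b) * e i)" by (simp only: mult.assoc)
    qed
    then show ?thesis unfolding r_def by (simp add: right_diff_distrib)
  qed
  have r_W: "b \<in> W \<Longrightarrow> r b = b" for b
  proof -
    assume b: "b \<in> W"
    then have bK: "b \<in> mpow m K" using WK by (rule rev_subsetD)
    have "\<And>i. i < n \<Longrightarrow> es i b = 0" by (rule Dk_van[OF es_D bK])
    then show ?thesis unfolding r_def by (simp add: iota_zero[OF base])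
  qed
  define fg where "fg g b = V.representation Bas (r b) g" for g b
  have fg_D: "fg g \<in> Dk \<iota> m (Suc K)" if g: "g \<in> G" for g
    unfolding Dk_iff
  proof (intro conjI allI ballI)
    fix a b c
    show "fg g (a + b) = fg g a + fg g b"
      unfolding fg_def r_add using V.representation_add[OF Bas(3) r_in r_in] by simp
    show "fg g (\<iota> c * b) = c * fg g b"
      unfolding fg_def r_scale using V.representation_scale[OF Bas(3) r_in] by simp
  next
    fix b assume b: "b \<in> mpow m (Suc K)"
    then have rb: "r b = b" "b \<in> V.span Bm" using r_W Bm(3) W_def by auto
    have "V.representation Bas b = V.representation Bm b"
      by (rule V.representation_extend[OF Bas(3) rb(2) Bas(1)])
    moreover have "g \<notin> Bm" using g G(4) by blast
    ultimately show "fg g b = 0" unfolding fg_def rb(1)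
      using V.representation_ne_zero[of Bm b g] by auto
  qed
  have recon: "r b - (\<Sum>g\<in>G. \<iota> (fg g b) * g) \<in> W" for b
  proof -
    define R where "R = V.representation Bas (r b)"
    define supp where "supp = {x. R x \<noteq> 0}"
    have supp: "finite supp" "supp \<subseteq> Bas"
      unfolding supp_def R_def using V.finite_representation V.representation_ne_zero by auto
    have rb: "r b = (\<Sum>x\<in>supp. \<iota> (R x) * x)"
      unfolding supp_def R_def using V.sum_nonzero_representation_eq[OF Bas(3) r_in] by simp
    also have "\<dots> = (\<Sum>x\<in>supp \<inter> G. \<iota> (R x) * x) + (\<Sum>x\<in>supp - G. \<iota> (R x) * x)"
      by (rule sum.Int_Diff[OF supp(1)])
    also have "(\<Sum>x\<in>supp \<inter> G. \<iota> (R x) * x) = (\<Sum>x\<in>G. \<iota> (R x) * x)"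
      by (rule sum.mono_neutral_left[OF G(1)]) (auto simp: supp_def iota_zero[OF base])
    finally have "r b - (\<Sum>g\<in>G. \<iota> (fg g b) * g) = (\<Sum>x\<in>supp - G. \<iota> (R x) * x)"
      unfolding fg_def R_def by (metis add_diff_cancel_left')
    also have "\<dots> \<in> V.span Bm"
      using supp(2) unfolding G_def by (intro V.span_sum V.span_scale V.span_base) auto
    finally show ?thesis using spanBm by blast
  qed
  obtain h where h: "bij_betw h {0..<card G} G" using ex_bij_betw_nat_finite[OF G(1)] by blast
  define c where "c = card G"
  define n' where "n' = Suc (n + c)"
  define e' where "e' i = (if i < n then e i else if i < n + c then h (i - n) else 0)" for i
  define es' where "es' i = (if i < n then es i else if i < n + c then fg (h (i - n)) else (\<lambda>_. 0))" for i
  have hG: "h j \<in> G" if "j < c" for j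
  proof -
    have "j \<in> {0..<card G}" using that by (simp add: c_def)
    then show ?thesis using bij_betwE[OF h] by blast
  qed
  have "Inv \<iota> m (Suc K) n' e' es'"
    unfolding Inv_def
  proof (intro conjI allI impI)
    fix i assume "i < n'"
    consider "i < n" | "\<not> i < n" "i < n + c" | "\<not> i < n" "\<not> i < n + c" by blast
    then show "es' i \<in> Dk \<iota> m (Suc K)"
    proof cases
      case 1 then show ?thesis unfolding es'_def using Dk_mono[of K "Suc K", OF _ es_D] by simp
    next
      case 2
      then have "h (i - n) \<in> G" by (intro hG) simp
      then show ?thesis unfolding es'_def using 2 fg_D by simp
    next
      case 3 then show ?thesis unfolding es'_def using Dk_0 by simp
    qed
  next
    fix b
    have "(\<Sum>i<n'. \<iota> (es' i b) * e' i) = (\<Sum>i<n + c. \<iota> (es' i b) * e' i)"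
    proof -
      have "e' (n + c) = 0" unfolding e'_def by simp
      then show ?thesis unfolding n'_def sum.lessThan_Suc by simp
    qed
    also have "\<dots> = (\<Sum>i<n. \<iota> (es' i b) * e' i) + (\<Sum>i\<in>{n..<n + c}. \<iota> (es' i b) * e' i)"
    proof -
      have "{..<n + c} = {..<n} \<union> {n..<n + c}" by auto
      moreover have "(\<Sum>i\<in>{..<n} \<union> {n..<n + c}. \<iota> (es' i b) * e' i) = (\<Sum>i<n. \<iota> (es' i b) * e' i) + (\<Sum>i\<in>{n..<n + c}. \<iota> (es' i b) * e' i)"
        by (rule sum.union_disjoint) auto
      ultimately show ?thesis by simp
    qed
    also have "(\<Sum>i<n. \<iota> (es' i b) * e' i) = (\<Sum>i<n. \<iota> (es i b) * e i)"
      by (rule sum.cong) (simp_all add: es'_def e'_def)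
    also have "(\<Sum>i\<in>{n..<n + c}. \<iota> (es' i b) * e' i) = (\<Sum>j\<in>{0..<c}. \<iota> (fg (h j) b) * h j)"
    proof -
      have "(\<Sum>i\<in>{n..<n + c}. \<iota> (es' i b) * e' i) = (\<Sum>i\<in>{0 + n..<c + n}. \<iota> (es' i b) * e' i)"
        by (simp only: add.commute add_0_left)
      also have "\<dots> = (\<Sum>j\<in>{0..<c}. \<iota> (es' (n + j) b) * e' (n + j))"
        by (simp only: sum.atLeastLessThan_shift_bounds comp_def)
      also have "\<dots> = (\<Sum>j\<in>{0..<c}. \<iota> (fg (h j) b) * h j)"
        by (rule sum.cong) (simp_all add: es'_def e'_def)
      finally show ?thesis .
    qed
    also have "\<dots> = (\<Sum>g\<in>G. \<iota> (fg g b) * g)"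
      using sum.reindex_bij_betw[OF h, of "\<lambda>g. \<iota> (fg g b) * g"] unfolding c_def .
    finally have "b - (\<Sum>i<n'. \<iota> (es' i b) * e' i) = r b - (\<Sum>g\<in>G. \<iota> (fg g b) * g)"
      unfolding r_def by (simp only: diff_diff_eq)
    then show "b - (\<Sum>i<n'. \<iota> (es' i b) * e' i) \<in> mpow m (Suc K)"
      using recon[of b] unfolding W_def by simp
  qed
  moreover have "n < n'" by (simp add: n'_def)
  moreover have "\<forall>i<n. e' i = e i \<and> es' i = es i" by (simp add: e'_def es'_def)
  moreover have "\<forall>i. n \<le> i \<longrightarrow> i < n' \<longrightarrow> e' i \<in> mpow m K"
  proof (intro allI impI)
    fix i assume i: "n \<le> i" "i < n'"
    show "e' i \<in> mpow m K"
    proof (cases "i < n + c")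
      case True
      then have "h (i - n) \<in> G" using i by (intro hG) simp
      then show ?thesis using i True G(2) unfolding e'_def by auto
    next
      case False
      then show ?thesis using i ideal_zero[OF mpow_ideal] unfolding e'_def by simp
    qed
  qed
  ultimately show ?thesis by (intro exI[of _ n'] exI[of _ e'] exI[of _ es']) simp
qed

end


definition frame :: "(complex \<Rightarrow> 'b::comm_ring_1) \<Rightarrow> 'b set \<Rightarrow> (nat \<Rightarrow> 'b) \<Rightarrow> (nat \<Rightarrow> 'b \<Rightarrow> complex) \<Rightarrow> (nat \<Rightarrow> nat) \<Rightarrow> bool" where
  "frame \<iota> m E ES N \<longleftrightarrow> N 0 = 0 \<and> (\<forall>K. N K < N (Suc K)) \<and> (\<forall>K i. i < N K \<longrightarrow> ES i \<in> Dk \<iota> m K)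
     \<and> (\<forall>K i. N K \<le> i \<longrightarrow> E i \<in> mpow m K) \<and> (\<forall>K b. b - (\<Sum>i<N K. \<iota> (ES i b) * E i) \<in> mpow m K)"

lemma frame_exists:
  assumes base: "deformation_base \<iota> m"
  shows "\<exists>E ES N. frame \<iota> m E ES N"
proof -
  define P where "P K st \<longleftrightarrow> Inv \<iota> m K (fst st) (fst (snd st)) (snd (snd st)) \<and> (K = 0 \<longrightarrow> fst st = 0)"
    for K and st :: "nat \<times> (nat \<Rightarrow> 'a) \<times> (nat \<Rightarrow> 'a \<Rightarrow> complex)"
  define Q where "Q K st st' \<longleftrightarrow> fst st < fst st' \<and> (\<forall>i<fst st. fst (snd st') i = fst (snd st) i \<and> snd (snd st') i = snd (snd st) i)
       \<and> (\<forall>i. fst st \<le> i \<longrightarrow> i < fst st' \<longrightarrow> fst (snd st') i \<in> mpow m K)"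
    for K and st st' :: "nat \<times> (nat \<Rightarrow> 'a) \<times> (nat \<Rightarrow> 'a \<Rightarrow> complex)"
  have P0: "\<exists>x. P 0 x"
    by (rule exI[of _ "(0, \<lambda>_. 0, \<lambda>_ _. 0)"]) (simp add: P_def Inv_def)
  have PS: "\<exists>y. P (Suc K) y \<and> Q K x y" if "P K x" for x K
  proof -
    have "Inv \<iota> m K (fst x) (fst (snd x)) (snd (snd x))" using that by (simp add: P_def)
    from step[OF base this] obtain n' e' es' where
      st: "fst x < n'" "\<forall>i<fst x. e' i = fst (snd x) i \<and> es' i = snd (snd x) i"
      "\<forall>i. fst x \<le> i \<longrightarrow> i < n' \<longrightarrow> e' i \<in> mpow m K" "Inv \<iota> m (Suc K) n' e' es'"
      by blast
    show ?thesis
      by (rule exI[of _ "(n', e', es')"]) (use st in \<open>simp add: P_def Q_def\<close>)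
  qed
  obtain f where f: "\<And>K. P K (f K)" "\<And>K. Q K (f K) (f (Suc K))"
    using dependent_nat_choice[of P Q, OF P0 PS] by blast
  define N where "N K = fst (f K)" for K
  define e where "e K = fst (snd (f K))" for K
  define es where "es K = snd (snd (f K))" for K
  have N0: "N 0 = 0" using f(1)[of 0] by (simp add: P_def N_def)
  have NS: "N K < N (Suc K)" for K using f(2)[of K] by (simp add: Q_def N_def)
  have Nge: "K \<le> N K" for K
    by (induction K) (use NS in \<open>auto simp: Suc_le_eq intro: le_less_trans\<close>)
  have inv: "Inv \<iota> m K (N K) (e K) (es K)" for K using f(1)[of K] by (simp add: P_def N_def e_def es_def)
  have cons1: "i < N K \<Longrightarrow> e (Suc K) i = e K i \<and> es (Suc K) i = es K i" for i K
    using f(2)[of K] by (simp add: Q_def N_def e_def es_def)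
  have newblk: "N K \<le> i \<Longrightarrow> i < N (Suc K) \<Longrightarrow> e (Suc K) i \<in> mpow m K" for i K
    using f(2)[of K] by (simp add: Q_def N_def e_def es_def)
  have Nmono: "K \<le> K' \<Longrightarrow> N K \<le> N K'" for K K'
    by (induction K' rule: dec_induct) (use NS in \<open>auto intro: order.trans less_imp_le\<close>)
  have cons: "e K' i = e K i \<and> es K' i = es K i" if "K \<le> K'" "i < N K" for i K K'
    using that(1)
  proof (induction K' rule: dec_induct)
    case (step K'')
    have "N K \<le> N K''" using Nmono[OF step(1)] .
    then show ?case using step cons1[of i K''] that(2) by simp
  qed simp
  define E where "E i = e (Suc i) i" for i
  define ES where "ES i = es (Suc i) i" for i
  have EK: "E i = e K i \<and> ES i = es K i" if "i < N K" for i K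
  proof (cases "K \<le> Suc i")
    case True then show ?thesis using cons[OF True that] by (simp add: E_def ES_def)
  next
    case False
    have "i < N (Suc i)" using Nge[of "Suc i"] by simp
    then show ?thesis using cons[of "Suc i" K i] False by (simp add: E_def ES_def)
  qed
  have F1: "ES i \<in> Dk \<iota> m K" if "i < N K" for i K
    using inv[of K] EK[OF that] that by (simp add: Inv_def)
  have F3: "b - (\<Sum>i<N K. \<iota> (ES i b) * E i) \<in> mpow m K" for K b
  proof -
    have "(\<Sum>i<N K. \<iota> (ES i b) * E i) = (\<Sum>i<N K. \<iota> (es K i b) * e K i)"
      by (rule sum.cong) (use EK in auto)
    then show ?thesis using inv[of K] by (simp add: Inv_def)
  qed
  have F2': "N K \<le> i \<longrightarrow> i < N (K + j) \<longrightarrow> E i \<in> mpow m K" for K i j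
  proof (induction j)
    case (Suc j)
    show ?case
    proof (intro impI)
      assume i: "N K \<le> i" "i < N (K + Suc j)"
      show "E i \<in> mpow m K"
      proof (cases "i < N (K + j)")
        case True then show ?thesis using Suc i by simp
      next
        case False
        then have "e (Suc (K + j)) i \<in> mpow m (K + j)" using newblk[of "K + j" i] i by simp
        moreover have "E i = e (Suc (K + j)) i" using EK[of i "Suc (K + j)"] i by simp
        ultimately show ?thesis using mpow_antimono[of K "K + j" m] by auto
      qed
    qed
  qed simp
  have F2: "E i \<in> mpow m K" if "N K \<le> i" for K i
  proof -
    have "i < N (K + Suc i)" using Nge[of "K + Suc i"] by simp
    then show ?thesis using F2'[of K i "Suc i"] that by simp
  qed
  show ?thesis unfolding frame_def
    by (intro exI[of _ E] exI[of _ ES] exI[of _ N]) (use N0 NS F1 F2 F3 in blast)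
qed


lemma csum_eval:
  assumes l: "l \<in> Bdual \<iota> m" and S: "finite S" "\<And>i. i \<notin> S \<Longrightarrow> mul (b i) l = (\<lambda>_. 0)"
    and y0: "\<And>i. y i (\<lambda>_. 0) = 0"
  shows "csum \<iota> m b y l = (\<Sum>i\<in>S. y i (mul (b i) l))"
proof -
  have sub: "{i. mul (b i) l \<noteq> (\<lambda>_. 0)} \<subseteq> S" using S(2) by blast
  have "csum \<iota> m b y l = (\<Sum>i\<in>{i. mul (b i) l \<noteq> (\<lambda>_. 0)}. y i (mul (b i) l))"
    using l by (simp add: csum_def mul_def)
  also have "\<dots> = (\<Sum>i\<in>S. y i (mul (b i) l))"
    by (rule sum.mono_neutral_left[OF S(1) sub]) (auto simp: y0)
  finally show ?thesis .
qed

lemma csum_out: "l \<notin> Bdual \<iota> m \<Longrightarrow> csum \<iota> m b y l = 0"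
  by (simp add: csum_def)

lemma adm_tail: assumes "adm m j b" shows "\<exists>n0. \<forall>i\<ge>n0. b i \<in> mpow m K"
proof -
  obtain k where k: "filterlim k at_top sequentially" "\<forall>i. j \<le> k i \<and> b i \<in> mpow m (k i)"
    using assms by (auto simp: adm_def)
  have "eventually (\<lambda>i. K \<le> k i) sequentially"
    using k(1) by (simp add: filterlim_at_top)
  then obtain n0 where "\<forall>i\<ge>n0. K \<le> k i" by (auto simp: eventually_sequentially)
  then show ?thesis using k(2) mpow_antimono by blast
qed

lemma adm_weaken: "adm m j b \<Longrightarrow> j' \<le> j \<Longrightarrow> adm m j' b"
  unfolding adm_def by (meson order_trans)

lemma mul_zero_fun: "l \<in> Dk \<iota> m K \<Longrightarrow> a \<in> mpow m K \<Longrightarrow> mul a l = (\<lambda>_. 0)"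
  by (auto simp: mul_def intro!: Dk_van ideal_mult2[OF mpow_ideal])

lemma csum_evalK:
  assumes l: "l \<in> Dk \<iota> m K" and b: "\<forall>i\<ge>n0. b i \<in> mpow m K"
    and y0: "\<forall>i. y i (\<lambda>_. 0) = 0"
  shows "csum \<iota> m b y l = (\<Sum>i<n0. y i (mul (b i) l))"
proof (rule csum_eval[where S="{..<n0}"])
  show "l \<in> Bdual \<iota> m" using l by (rule Dk_Bdual)
  show "\<And>i. i \<notin> {..<n0} \<Longrightarrow> mul (b i) l = (\<lambda>_. 0)" using b mul_zero_fun[OF l] by simp
qed (simp_all add: y0)

lemma Bdual_addc: assumes "l \<in> Bdual \<iota> m" "l' \<in> Bdual \<iota> m" shows "(\<lambda>b. l b + l' b) \<in> Bdual \<iota> m"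
proof -
  obtain K K' where "l \<in> Dk \<iota> m K" "l' \<in> Dk \<iota> m K'" using assms Bdual_Dk by metis
  then have "l \<in> Dk \<iota> m (max K K')" "l' \<in> Dk \<iota> m (max K K')" using Dk_mono by (metis max.cobounded1, metis max.cobounded2)
  then show ?thesis using Dk_add Dk_Bdual by blast
qed

lemma Bdual_scalec: assumes "l \<in> Bdual \<iota> m" shows "(\<lambda>b. c * l b) \<in> Bdual \<iota> m"
  using assms Bdual_Dk Dk_scale Dk_Bdual by metis

lemma mul_mul: "mul a (mul b l) = mul (b * a) l"
  by (simp add: mul_def mult.assoc)

context
  fixes sc :: "complex \<Rightarrow> 'x::ab_group_add \<Rightarrow> 'x"
  assumes X: "vector_space sc"
begin

interpretation X: vector_space sc by (rule X)

lemma ct_add: "T \<in> ctens \<iota> m sc \<Longrightarrow> l \<in> Bdual \<iota> m \<Longrightarrow> l' \<in> Bdual \<iota> m \<Longrightarrow> T (\<lambda>b. l b + l' b) = T l + T l'"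
  by (simp add: ctens_def)
lemma ct_scale: "T \<in> ctens \<iota> m sc \<Longrightarrow> l \<in> Bdual \<iota> m \<Longrightarrow> T (\<lambda>b. c * l b) = sc c (T l)"
  by (simp add: ctens_def)
lemma ct_out: "T \<in> ctens \<iota> m sc \<Longrightarrow> l \<notin> Bdual \<iota> m \<Longrightarrow> T l = 0"
  by (simp add: ctens_def)
lemma ct_zero: assumes "T \<in> ctens \<iota> m sc" shows "T (\<lambda>_. 0) = 0"
  using ct_scale[OF assms Bdual_0, of 0] by simp

lemma ct_sum:
  assumes T: "T \<in> ctens \<iota> m sc" and A: "finite A" and l: "\<forall>a\<in>A. l a \<in> Dk \<iota> m K"
  shows "T (\<lambda>x. \<Sum>a\<in>A. c a * l a x) = (\<Sum>a\<in>A. sc (c a) (T (l a)))"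
  using A l
proof (induction A rule: finite_induct)
  case empty then show ?case using ct_zero[OF T] by simp
next
  case (insert a F)
  have D1: "(\<lambda>x. c a * l a x) \<in> Bdual \<iota> m" using insert Dk_scale Dk_Bdual by blast
  have D2: "(\<lambda>x. \<Sum>a\<in>F. c a * l a x) \<in> Bdual \<iota> m"
    using insert Dk_sum[of F "\<lambda>a x. c a * l a x"] Dk_scale Dk_Bdual by blast
  have "T (\<lambda>x. \<Sum>a\<in>insert a F. c a * l a x) = T (\<lambda>x. c a * l a x + (\<Sum>a\<in>F. c a * l a x))"
    using insert by simp
  also have "\<dots> = T (\<lambda>x. c a * l a x) + T (\<lambda>x. \<Sum>a\<in>F. c a * l a x)"
    using ct_add[OF T D1 D2] by simp
  also have "T (\<lambda>x. c a * l a x) = sc (c a) (T (l a))"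
    using insert Dk_Bdual ct_scale[OF T] by blast
  finally show ?case using insert by simp
qed

lemma emb_ct: "emb \<iota> m sc y \<in> ctens \<iota> m sc"
  unfolding ctens_def emb_def
  by (auto simp: X.scale_left_distrib X.scale_scale Bdual_addc Bdual_scalec)

end


definition PhiM :: "(complex \<Rightarrow> 'b::comm_ring_1) \<Rightarrow> 'b set \<Rightarrow> ('x \<Rightarrow> (('b \<Rightarrow> complex) \<Rightarrow> 'x::comm_monoid_add))
   \<Rightarrow> (nat \<Rightarrow> 'b) \<Rightarrow> (nat \<Rightarrow> 'b \<Rightarrow> complex) \<Rightarrow> (('b \<Rightarrow> complex) \<Rightarrow> 'x) \<Rightarrow> (('b \<Rightarrow> complex) \<Rightarrow> 'x)" where
  "PhiM \<iota> m \<phi> E ES T = csum \<iota> m E (\<lambda>i. \<phi> (T (ES i)))"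

context
  fixes \<iota> :: "complex \<Rightarrow> 'b::comm_ring_1" and m :: "'b set"
    and sc :: "complex \<Rightarrow> 'x::ab_group_add \<Rightarrow> 'x"
    and M :: "(('b \<Rightarrow> complex) \<Rightarrow> 'x) set"
    and \<phi> :: "'x \<Rightarrow> (('b \<Rightarrow> complex) \<Rightarrow> 'x)"
    and E :: "nat \<Rightarrow> 'b" and ES :: "nat \<Rightarrow> 'b \<Rightarrow> complex" and N :: "nat \<Rightarrow> nat"
  assumes base: "deformation_base \<iota> m"
    and X: "vector_space sc"
    and sub: "B_submodule \<iota> m sc M"
    and qf: "quasi_flat \<iota> m sc M"
    and pc: "pseudoclosed \<iota> m M"
    and sect: "\<forall>y\<in>proj \<iota> m ` M. \<phi> y \<in> M \<and> proj \<iota> m (\<phi> y) = y"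
    and lin_add: "\<forall>y\<in>proj \<iota> m ` M. \<forall>z\<in>proj \<iota> m ` M. \<phi> (y + z) = (\<lambda>l. \<phi> y l + \<phi> z l)"
    and lin_scale: "\<forall>c. \<forall>y\<in>proj \<iota> m ` M. \<phi> (sc c y) = (\<lambda>l. sc c (\<phi> y l))"
    and fr: "frame \<iota> m E ES N"
begin

interpretation X: vector_space sc by (rule X)

abbreviation "V \<equiv> proj \<iota> m ` M"
abbreviation "CV \<equiv> ctens_sub \<iota> m sc V"

lemma N0: "N 0 = 0" using fr by (simp add: frame_def)
lemma NS: "N K < N (Suc K)" using fr by (simp add: frame_def)
lemma F1: "i < N K \<Longrightarrow> ES i \<in> Dk \<iota> m K" using fr by (simp add: frame_def)
lemma F2: "N K \<le> i \<Longrightarrow> E i \<in> mpow m K" using fr by (simp add: frame_def)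
lemma F3: "b - (\<Sum>i<N K. \<iota> (ES i b) * E i) \<in> mpow m K" using fr by (simp add: frame_def)
lemma Nge: "K \<le> N K"
  by (induction K) (use NS in \<open>auto simp: Suc_le_eq intro: le_less_trans\<close>)

lemma F3':
  assumes l: "l \<in> Dk \<iota> m K"
  shows "l (b * c) = (\<Sum>i<N K. ES i b * l (E i * c))"
proof -
  define S where "S = (\<Sum>i<N K. \<iota> (ES i b) * E i)"
  have r: "(b - S) * c \<in> mpow m K" unfolding S_def by (rule ideal_mult2[OF mpow_ideal F3])
  have "b * c = S * c + (b - S) * c" by (simp add: algebra_simps)
  then have "l (b * c) = l (S * c) + l ((b - S) * c)"
    using Bdual_add[OF Dk_Bdual[OF l]] by metis
  also have "l ((b - S) * c) = 0" using Dk_van[OF l r] .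
  also have "S * c = (\<Sum>i<N K. \<iota> (ES i b) * (E i * c))"
    unfolding S_def sum_distrib_right by (simp add: mult.assoc)
  also have "l \<dots> = (\<Sum>i<N K. ES i b * l (E i * c))"
    unfolding Bdual_sum[OF Dk_Bdual[OF l]] by (rule sum.cong[OF refl], rule Bdual_scale[OF Dk_Bdual[OF l]])
  finally show ?thesis by simp
qed

lemma F5: assumes l: "l \<in> Dk \<iota> m K" shows "l = (\<lambda>c. \<Sum>i<N K. ES i c * l (E i))"
proof
  fix c show "l c = (\<Sum>i<N K. ES i c * l (E i))" using F3'[OF l, of c 1] by simp
qed

lemma adm_k: "\<exists>k. filterlim k at_top sequentially \<and> (\<forall>i. N (k i) \<le> i)"
proof -
  define k where "k i = Max {K. N K \<le> i}" for i
  have fin: "finite {K. N K \<le> i}" for i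
    by (rule finite_subset[of _ "{..i}"]) (use Nge in \<open>auto intro: order.trans\<close>)
  have mem: "N (k i) \<le> i" for i
  proof -
    have "0 \<in> {K. N K \<le> i}" by (simp add: N0)
    then have "k i \<in> {K. N K \<le> i}" unfolding k_def using fin Max_in by blast
    then show ?thesis by simp
  qed
  have "filterlim k at_top sequentially"
    unfolding filterlim_at_top eventually_sequentially
  proof (intro allI exI[of _ "N _"] allI impI)
    fix Z i assume "N Z \<le> i"
    then show "Z \<le> k i" unfolding k_def using fin by (intro Max_ge) auto
  qed
  then show ?thesis using mem by blast
qed

lemma adm_E: "adm m 0 E"
proof -
  obtain k where k: "filterlim k at_top sequentially" "\<forall>i. N (k i) \<le> i" using adm_k by blast
  then show ?thesis unfolding adm_def using F2 by blast
qed

lemma M_ct: "T \<in> M \<Longrightarrow> T \<in> ctens \<iota> m sc" using sub by (auto simp: B_submodule_def)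
lemma M_zero: "(\<lambda>_. 0) \<in> M" using sub by (simp add: B_submodule_def)
lemma M_add: "T \<in> M \<Longrightarrow> S \<in> M \<Longrightarrow> (\<lambda>l. T l + S l) \<in> M" using sub by (simp add: B_submodule_def)
lemma M_Bact: "T \<in> M \<Longrightarrow> Bact \<iota> m b T \<in> M" using sub by (simp add: B_submodule_def)

lemma M_neg: assumes T: "T \<in> M" shows "(\<lambda>l. - T l) \<in> M"
proof -
  have "Bact \<iota> m (\<iota> (-1)) T = (\<lambda>l. - T l)"
  proof
    fix l
    show "Bact \<iota> m (\<iota> (-1)) T l = - T l"
    proof (cases "l \<in> Bdual \<iota> m")
      case True
      have "(\<lambda>b'. l (\<iota> (-1) * b')) = (\<lambda>b'. (-1) * l b')" using Bdual_scale[OF True] by simp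
      then show ?thesis using True ct_scale[OF X M_ct[OF T] True, of "-1"] by (simp add: Bact_def)
    next
      case False then show ?thesis using ct_out[OF X M_ct[OF T] False] by (simp add: Bact_def)
    qed
  qed
  then show ?thesis using M_Bact[OF T] by metis
qed

lemma M_diff: assumes "T \<in> M" "S \<in> M" shows "(\<lambda>l. T l - S l) \<in> M"
proof -
  have "(\<lambda>l. T l - S l) = (\<lambda>l. T l + (- S l))" by simp
  then show ?thesis using M_add[OF assms(1) M_neg[OF assms(2)]] by simp
qed

lemma resid_D: "resid \<iota> m \<in> Bdual \<iota> m" using resid_Dk1[OF base] Dk_Bdual by blast

lemma V_zero: "0 \<in> V"
proof -
  have "proj \<iota> m (\<lambda>_. 0) = 0" by (simp add: proj_def)
  then show ?thesis using M_zero by (rule image_eqI[OF sym])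
qed
lemma V_add: assumes "y \<in> V" "z \<in> V" shows "y + z \<in> V"
proof -
  obtain T S where "T \<in> M" "S \<in> M" "y = proj \<iota> m T" "z = proj \<iota> m S" using assms by blast
  then have "y + z = proj \<iota> m (\<lambda>l. T l + S l)" by (simp add: proj_def)
  then show ?thesis using M_add[OF \<open>T \<in> M\<close> \<open>S \<in> M\<close>] by (rule image_eqI)
qed
lemma V_scale: assumes "y \<in> V" shows "sc c y \<in> V"
proof -
  obtain T where T: "T \<in> M" "y = proj \<iota> m T" using assms by blast
  have "proj \<iota> m (Bact \<iota> m (\<iota> c) T) = T (\<lambda>b'. resid \<iota> m (\<iota> c * b'))"
    using resid_D by (simp add: proj_def Bact_def)
  also have "(\<lambda>b'. resid \<iota> m (\<iota> c * b')) = (\<lambda>b'. c * resid \<iota> m b')"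
    using Bdual_scale[OF resid_D] by simp
  also have "T \<dots> = sc c y" using ct_scale[OF X M_ct[OF T(1)] resid_D] T(2) by (simp add: proj_def)
  finally show ?thesis using M_Bact[OF T(1)] by (rule image_eqI[OF sym])
qed
lemma V_neg: assumes "y \<in> V" shows "- y \<in> V"
proof -
  have "sc (-1) y = - y" using X.scale_minus_left[of 1 y] by simp
  then show ?thesis using V_scale[OF assms, of "-1"] by simp
qed
lemma V_diff: assumes "y \<in> V" "z \<in> V" shows "y - z \<in> V"
proof -
  have "y - z = y + (- z)" by simp
  then show ?thesis using V_add[OF assms(1) V_neg[OF assms(2)]] by simp
qed
lemma V_sum: "(\<forall>a\<in>A. f a \<in> V) \<Longrightarrow> sum f A \<in> V"
  by (induction A rule: infinite_finite_induct) (simp_all add: V_zero V_add)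

lemma phi_M: "y \<in> V \<Longrightarrow> \<phi> y \<in> M" using sect by blast
lemma phi_proj: "y \<in> V \<Longrightarrow> proj \<iota> m (\<phi> y) = y" using sect by blast
lemma phi_ct: "y \<in> V \<Longrightarrow> \<phi> y \<in> ctens \<iota> m sc" using phi_M M_ct by blast
lemma phi_scale: "y \<in> V \<Longrightarrow> \<phi> (sc c y) = (\<lambda>l. sc c (\<phi> y l))"
  using lin_scale by blast
lemma phi_add: "y \<in> V \<Longrightarrow> z \<in> V \<Longrightarrow> \<phi> (y + z) = (\<lambda>l. \<phi> y l + \<phi> z l)"
  using lin_add by blast
lemma phi_zero: "\<phi> 0 = (\<lambda>_. 0)"
proof
  fix l
  have "\<phi> (0 + 0) = (\<lambda>l. \<phi> 0 l + \<phi> 0 l)" using lin_add V_zero by blast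
  then have "\<phi> 0 l = \<phi> 0 l + \<phi> 0 l" by (metis add_0)
  then show "\<phi> 0 l = 0" by simp
qed
lemma phi_sum:
  assumes "finite A" "\<forall>a\<in>A. y a \<in> V"
  shows "\<phi> (\<Sum>a\<in>A. sc (c a) (y a)) = (\<lambda>l. \<Sum>a\<in>A. sc (c a) (\<phi> (y a) l))"
  using assms
proof (induction A rule: finite_induct)
  case empty then show ?case by (simp add: phi_zero)
next
  case (insert a F)
  have "sc (c a) (y a) \<in> V" using insert V_scale by simp
  moreover have "(\<Sum>a\<in>F. sc (c a) (y a)) \<in> V" using insert by (intro V_sum ballI V_scale) simp
  ultimately have "\<phi> (sc (c a) (y a) + (\<Sum>a\<in>F. sc (c a) (y a))) =
      (\<lambda>l. \<phi> (sc (c a) (y a)) l + \<phi> (\<Sum>a\<in>F. sc (c a) (y a)) l)" using lin_add by blast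
  moreover have "\<phi> (sc (c a) (y a)) = (\<lambda>l. sc (c a) (\<phi> (y a) l))" using insert by (intro phi_scale) simp
  ultimately show ?case using insert by simp
qed
lemma phi_sum1:
  assumes "finite A" "\<forall>a\<in>A. y a \<in> V"
  shows "\<phi> (\<Sum>a\<in>A. y a) = (\<lambda>l. \<Sum>a\<in>A. \<phi> (y a) l)"
  using phi_sum[OF assms, of "\<lambda>_. 1"] by simp

lemma CV_ct: "T \<in> CV \<Longrightarrow> T \<in> ctens \<iota> m sc" by (simp add: ctens_sub_def)
lemma CV_V: "T \<in> CV \<Longrightarrow> T l \<in> V" by (simp add: ctens_sub_def)


abbreviation "Phi \<equiv> PhiM \<iota> m \<phi> E ES"

lemma Phi_out: "l \<notin> Bdual \<iota> m \<Longrightarrow> Phi T l = 0"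
  by (simp add: PhiM_def csum_out)

lemma PhiK:
  assumes T: "\<forall>i. T (ES i) \<in> V" and l: "l \<in> Dk \<iota> m K"
  shows "Phi T l = (\<Sum>i<N K. \<phi> (T (ES i)) (mul (E i) l))"
  unfolding PhiM_def
proof (rule csum_evalK[OF l])
  show "\<forall>i\<ge>N K. E i \<in> mpow m K" using F2 by blast
  show "\<forall>i. \<phi> (T (ES i)) (\<lambda>_. 0) = 0" using ct_zero[OF X phi_ct] T by blast
qed

lemma CV_ES: "T \<in> CV \<Longrightarrow> \<forall>i. T (ES i) \<in> V" using CV_V by blast

lemma Phi_zero_fun: assumes T: "\<forall>i. T (ES i) \<in> V" shows "Phi T (\<lambda>_. 0) = 0"
  using PhiK[OF T Dk_0[of \<iota> m 0]] N0 by simp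

lemma CV_emb: assumes y: "y \<in> V" shows "emb \<iota> m sc y \<in> CV"
  unfolding ctens_sub_def using emb_ct[OF X] V_scale[OF y] V_zero by (auto simp: emb_def)

lemma CV_zero: "(\<lambda>_. 0) \<in> CV"
  unfolding ctens_sub_def ctens_def using V_zero by simp

lemma CV_add: assumes T: "T \<in> CV" and S: "S \<in> CV" shows "(\<lambda>l. T l + S l) \<in> CV"
  unfolding ctens_sub_def ctens_def mem_Collect_eq
proof (intro conjI ballI allI impI)
  fix l l' assume l: "l \<in> Bdual \<iota> m" and l': "l' \<in> Bdual \<iota> m"
  show "T (\<lambda>b. l b + l' b) + S (\<lambda>b. l b + l' b) = T l + S l + (T l' + S l')"
    using ct_add[OF X CV_ct[OF T] l l'] ct_add[OF X CV_ct[OF S] l l'] by (simp add: algebra_simps)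
next
  fix c l assume l: "l \<in> Bdual \<iota> m"
  show "T (\<lambda>b. c * l b) + S (\<lambda>b. c * l b) = sc c (T l + S l)"
    using ct_scale[OF X CV_ct[OF T] l] ct_scale[OF X CV_ct[OF S] l] by (simp add: X.scale_right_distrib)
next
  fix l assume "l \<notin> Bdual \<iota> m"
  then show "T l + S l = 0" using ct_out[OF X CV_ct[OF T]] ct_out[OF X CV_ct[OF S]] by simp
next
  fix l show "T l + S l \<in> V" using CV_V[OF T] CV_V[OF S] by (rule V_add)
qed

lemma CV_diff: assumes T: "T \<in> CV" and S: "S \<in> CV" shows "(\<lambda>l. T l - S l) \<in> CV"
  unfolding ctens_sub_def ctens_def mem_Collect_eq
proof (intro conjI ballI allI impI)
  fix l l' assume l: "l \<in> Bdual \<iota> m" and l': "l' \<in> Bdual \<iota> m"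
  show "T (\<lambda>b. l b + l' b) - S (\<lambda>b. l b + l' b) = T l - S l + (T l' - S l')"
    using ct_add[OF X CV_ct[OF T] l l'] ct_add[OF X CV_ct[OF S] l l'] by (simp add: algebra_simps)
next
  fix c l assume l: "l \<in> Bdual \<iota> m"
  show "T (\<lambda>b. c * l b) - S (\<lambda>b. c * l b) = sc c (T l - S l)"
    using ct_scale[OF X CV_ct[OF T] l] ct_scale[OF X CV_ct[OF S] l] by (simp add: X.scale_right_diff_distrib)
next
  fix l assume "l \<notin> Bdual \<iota> m"
  then show "T l - S l = 0" using ct_out[OF X CV_ct[OF T]] ct_out[OF X CV_ct[OF S]] by simp
next
  fix l show "T l - S l \<in> V" using CV_V[OF T] CV_V[OF S] by (rule V_diff)
qed

lemma common_K: assumes "l \<in> Bdual \<iota> m" "l' \<in> Bdual \<iota> m" obtains K where "l \<in> Dk \<iota> m K" "l' \<in> Dk \<iota> m K"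
proof -
  obtain K K' where "l \<in> Dk \<iota> m K" "l' \<in> Dk \<iota> m K'" using assms Bdual_Dk by metis
  then have "l \<in> Dk \<iota> m (max K K')" "l' \<in> Dk \<iota> m (max K K')"
    using Dk_mono by (metis max.cobounded1, metis max.cobounded2)
  then show ?thesis by (rule that)
qed

lemma csum_CV:
  assumes b: "adm m j b" and S: "\<forall>i. S i \<in> CV"
  shows "csum \<iota> m b S \<in> CV"
  unfolding ctens_sub_def ctens_def mem_Collect_eq
proof (intro conjI ballI allI impI)
  have S0: "\<forall>i. S i (\<lambda>_. 0) = 0" using S ct_zero[OF X CV_ct] by blast
  fix l l' assume l: "l \<in> Bdual \<iota> m" and l': "l' \<in> Bdual \<iota> m"
  obtain K where K: "l \<in> Dk \<iota> m K" "l' \<in> Dk \<iota> m K" using common_K[OF l l'] by blast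
  obtain n0 where n0: "\<forall>i\<ge>n0. b i \<in> mpow m K" using adm_tail[OF b] by blast
  have ll: "(\<lambda>x. l x + l' x) \<in> Dk \<iota> m K" using Dk_add[OF K] .
  have "csum \<iota> m b S (\<lambda>x. l x + l' x) = (\<Sum>i<n0. S i (mul (b i) (\<lambda>x. l x + l' x)))"
    by (rule csum_evalK[where y=S, OF ll n0 S0])
  also have "\<dots> = (\<Sum>i<n0. S i (mul (b i) l) + S i (mul (b i) l'))"
  proof (rule sum.cong[OF refl])
    fix i
    have "mul (b i) (\<lambda>x. l x + l' x) = (\<lambda>x. mul (b i) l x + mul (b i) l' x)" by (simp add: mul_def)
    then show "S i (mul (b i) (\<lambda>x. l x + l' x)) = S i (mul (b i) l) + S i (mul (b i) l')"
      using ct_add[OF X CV_ct[OF S[rule_format]] Dk_Bdual[OF Dk_mul[OF K(1)]] Dk_Bdual[OF Dk_mul[OF K(2)]]] by simp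
  qed
  also have "\<dots> = csum \<iota> m b S l + csum \<iota> m b S l'"
    by (simp add: sum.distrib csum_evalK[where y=S, OF K(1) n0 S0] csum_evalK[where y=S, OF K(2) n0 S0])
  finally show "csum \<iota> m b S (\<lambda>x. l x + l' x) = csum \<iota> m b S l + csum \<iota> m b S l'" .
next
  have S0: "\<forall>i. S i (\<lambda>_. 0) = 0" using S ct_zero[OF X CV_ct] by blast
  fix c l assume l: "l \<in> Bdual \<iota> m"
  obtain K where K: "l \<in> Dk \<iota> m K" using Bdual_Dk[OF l] by blast
  obtain n0 where n0: "\<forall>i\<ge>n0. b i \<in> mpow m K" using adm_tail[OF b] by blast
  have "csum \<iota> m b S (\<lambda>x. c * l x) = (\<Sum>i<n0. S i (mul (b i) (\<lambda>x. c * l x)))"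
    by (rule csum_evalK[where y=S, OF Dk_scale[OF K] n0 S0])
  also have "\<dots> = (\<Sum>i<n0. sc c (S i (mul (b i) l)))"
  proof (rule sum.cong[OF refl])
    fix i
    have "mul (b i) (\<lambda>x. c * l x) = (\<lambda>x. c * mul (b i) l x)" by (simp add: mul_def)
    then show "S i (mul (b i) (\<lambda>x. c * l x)) = sc c (S i (mul (b i) l))"
      using ct_scale[OF X CV_ct[OF S[rule_format]] Dk_Bdual[OF Dk_mul[OF K]]] by simp
  qed
  also have "\<dots> = sc c (csum \<iota> m b S l)"
    by (simp add: X.scale_sum_right csum_evalK[where y=S, OF K n0 S0])
  finally show "csum \<iota> m b S (\<lambda>x. c * l x) = sc c (csum \<iota> m b S l)" .
next
  fix l assume "l \<notin> Bdual \<iota> m" then show "csum \<iota> m b S l = 0" by (rule csum_out)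
next
  have S0: "\<forall>i. S i (\<lambda>_. 0) = 0" using S ct_zero[OF X CV_ct] by blast
  fix l show "csum \<iota> m b S l \<in> V"
  proof (cases "l \<in> Bdual \<iota> m")
    case True
    obtain K where K: "l \<in> Dk \<iota> m K" using Bdual_Dk[OF True] by blast
    obtain n0 where n0: "\<forall>i\<ge>n0. b i \<in> mpow m K" using adm_tail[OF b] by blast
    show ?thesis unfolding csum_evalK[where y=S, OF K n0 S0] using S CV_V by (intro V_sum) blast
  qed (simp add: csum_out V_zero)
qed

lemma GL:
  assumes S: "S \<in> CV" and l: "l \<in> Dk \<iota> m K"
  shows "(\<Sum>i<N K. \<phi> (S (mul b (ES i))) (mul (E i) l)) = (\<Sum>i<N K. \<phi> (S (ES i)) (mul (b * E i) l))"
proof -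
  have SD: "S (ES p) \<in> V" for p using CV_V[OF S] .
  have exp: "\<phi> (S (mul b (ES i))) = (\<lambda>l'. \<Sum>p<N K. sc (ES i (b * E p)) (\<phi> (S (ES p)) l'))" if i: "i < N K" for i
  proof -
    have "mul b (ES i) = (\<lambda>x. \<Sum>p<N K. ES p x * mul b (ES i) (E p))"
      by (rule F5[OF Dk_mul[OF F1[OF i]]])
    also have "\<dots> = (\<lambda>x. \<Sum>p<N K. ES i (b * E p) * ES p x)"
      by (simp add: mul_def mult.commute)
    finally have "S (mul b (ES i)) = (\<Sum>p<N K. sc (ES i (b * E p)) (S (ES p)))"
      using ct_sum[OF X CV_ct[OF S] finite_lessThan, where l=ES and K=K and c="\<lambda>p. ES i (b * E p)"] F1 by simp
    then show ?thesis using phi_sum[OF finite_lessThan, where y="\<lambda>p. S (ES p)"] SD by simp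
  qed
  have "(\<Sum>i<N K. \<phi> (S (mul b (ES i))) (mul (E i) l))
      = (\<Sum>i<N K. \<Sum>p<N K. sc (ES i (b * E p)) (\<phi> (S (ES p)) (mul (E i) l)))"
    by (rule sum.cong[OF refl]) (simp add: exp)
  also have "\<dots> = (\<Sum>p<N K. \<Sum>i<N K. sc (ES i (b * E p)) (\<phi> (S (ES p)) (mul (E i) l)))"
    by (rule sum.swap)
  also have "\<dots> = (\<Sum>p<N K. \<phi> (S (ES p)) (mul (b * E p) l))"
  proof (rule sum.cong[OF refl])
    fix p
    have "(\<Sum>i<N K. sc (ES i (b * E p)) (\<phi> (S (ES p)) (mul (E i) l)))
        = \<phi> (S (ES p)) (\<lambda>x. \<Sum>i<N K. ES i (b * E p) * mul (E i) l x)"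
      using ct_sum[OF X phi_ct[OF SD] finite_lessThan, where l="\<lambda>i. mul (E i) l" and K=K and c="\<lambda>i. ES i (b * E p)"]
        Dk_mul[OF l] by simp
    also have "(\<lambda>x. \<Sum>i<N K. ES i (b * E p) * mul (E i) l x) = mul (b * E p) l"
    proof
      fix x show "(\<Sum>i<N K. ES i (b * E p) * mul (E i) l x) = mul (b * E p) l x"
        using F3'[OF l, of "b * E p" x] by (simp add: mul_def)
    qed
    finally show "(\<Sum>i<N K. sc (ES i (b * E p)) (\<phi> (S (ES p)) (mul (E i) l))) = \<phi> (S (ES p)) (mul (b * E p) l)" .
  qed
  finally show ?thesis .
qed

lemma KL:
  assumes b: "adm m j b" and S: "\<forall>i. S i \<in> CV"
  shows "Phi (csum \<iota> m b S) = csum \<iota> m b (\<lambda>i. Phi (S i))"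
proof
  fix l
  show "Phi (csum \<iota> m b S) l = csum \<iota> m b (\<lambda>i. Phi (S i)) l"
  proof (cases "l \<in> Bdual \<iota> m")
    case False then show ?thesis by (simp add: Phi_out csum_out)
  next
    case True
    obtain K where K: "l \<in> Dk \<iota> m K" using Bdual_Dk[OF True] by blast
    obtain n0 where n0: "\<forall>i\<ge>n0. b i \<in> mpow m K" using adm_tail[OF b] by blast
    have S0: "\<forall>i. S i (\<lambda>_. 0) = 0" using S ct_zero[OF X CV_ct] by blast
    have SV: "\<And>i l. S i l \<in> V" using S CV_V by blast
    have SES: "\<And>j. \<forall>i. S j (ES i) \<in> V" using SV by blast
    have cCV: "csum \<iota> m b S \<in> CV" by (rule csum_CV[OF b S])
    have "Phi (csum \<iota> m b S) l = (\<Sum>i<N K. \<phi> (csum \<iota> m b S (ES i)) (mul (E i) l))"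
      by (rule PhiK[OF CV_ES[OF cCV] K])
    also have "\<dots> = (\<Sum>i<N K. \<Sum>j<n0. \<phi> (S j (mul (b j) (ES i))) (mul (E i) l))"
    proof (rule sum.cong[OF refl])
      fix i assume "i \<in> {..<N K}"
      then have "csum \<iota> m b S (ES i) = (\<Sum>j<n0. S j (mul (b j) (ES i)))"
        using csum_evalK[where y=S, OF F1 n0 S0] by simp
      then show "\<phi> (csum \<iota> m b S (ES i)) (mul (E i) l) = (\<Sum>j<n0. \<phi> (S j (mul (b j) (ES i))) (mul (E i) l))"
        using phi_sum1[OF finite_lessThan, where y="\<lambda>j. S j (mul (b j) (ES i))"] SV by simp
    qed
    also have "\<dots> = (\<Sum>j<n0. \<Sum>i<N K. \<phi> (S j (mul (b j) (ES i))) (mul (E i) l))"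
      by (rule sum.swap)
    also have "\<dots> = (\<Sum>j<n0. \<Sum>i<N K. \<phi> (S j (ES i)) (mul (b j * E i) l))"
      using GL[OF S[rule_format] K] by simp
    also have "\<dots> = (\<Sum>j<n0. Phi (S j) (mul (b j) l))"
    proof (rule sum.cong[OF refl])
      fix j
      have "Phi (S j) (mul (b j) l) = (\<Sum>i<N K. \<phi> (S j (ES i)) (mul (E i) (mul (b j) l)))"
        by (rule PhiK[OF SES Dk_mul[OF K]])
      then show "(\<Sum>i<N K. \<phi> (S j (ES i)) (mul (b j * E i) l)) = Phi (S j) (mul (b j) l)"
        by (simp add: mul_mul)
    qed
    also have "\<dots> = csum \<iota> m b (\<lambda>i. Phi (S i)) l"
      by (rule csum_evalK[OF K n0, symmetric]) (use Phi_zero_fun SES in blast)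
    finally show ?thesis .
  qed
qed


lemma Phi_emb: assumes y: "y \<in> V" shows "Phi (emb \<iota> m sc y) = \<phi> y"
proof
  fix l show "Phi (emb \<iota> m sc y) l = \<phi> y l"
  proof (cases "l \<in> Bdual \<iota> m")
    case False then show ?thesis using Phi_out ct_out[OF X phi_ct[OF y] False] by simp
  next
    case True
    obtain K where K: "l \<in> Dk \<iota> m K" using Bdual_Dk[OF True] by blast
    have "Phi (emb \<iota> m sc y) l = (\<Sum>i<N K. \<phi> (emb \<iota> m sc y (ES i)) (mul (E i) l))"
      by (rule PhiK[OF CV_ES[OF CV_emb[OF y]] K])
    also have "\<dots> = (\<Sum>i<N K. sc (ES i 1) (\<phi> y (mul (E i) l)))"
    proof (rule sum.cong[OF refl])
      fix i assume "i \<in> {..<N K}"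
      then have "ES i \<in> Bdual \<iota> m" using Dk_Bdual[OF F1] by simp
      then have "emb \<iota> m sc y (ES i) = sc (ES i 1) y" by (simp add: emb_def)
      then show "\<phi> (emb \<iota> m sc y (ES i)) (mul (E i) l) = sc (ES i 1) (\<phi> y (mul (E i) l))"
        using phi_scale[OF y] by simp
    qed
    also have "\<dots> = \<phi> y (\<lambda>x. \<Sum>i<N K. ES i 1 * mul (E i) l x)"
      using ct_sum[OF X phi_ct[OF y] finite_lessThan, where l="\<lambda>i. mul (E i) l" and K=K and c="\<lambda>i. ES i 1"]
        Dk_mul[OF K] by simp
    also have "(\<lambda>x. \<Sum>i<N K. ES i 1 * mul (E i) l x) = l"
    proof
      fix x show "(\<Sum>i<N K. ES i 1 * mul (E i) l x) = l x"
        using F3'[OF K, of 1 x] by (simp add: mul_def)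
    qed
    finally show ?thesis .
  qed
qed

lemma Phi_add: assumes T: "T \<in> CV" and S: "S \<in> CV"
  shows "Phi (\<lambda>l. T l + S l) = (\<lambda>l. Phi T l + Phi S l)"
proof
  fix l show "Phi (\<lambda>l. T l + S l) l = Phi T l + Phi S l"
  proof (cases "l \<in> Bdual \<iota> m")
    case False then show ?thesis by (simp add: Phi_out)
  next
    case True
    obtain K where K: "l \<in> Dk \<iota> m K" using Bdual_Dk[OF True] by blast
    have "Phi (\<lambda>l. T l + S l) l = (\<Sum>i<N K. \<phi> (T (ES i) + S (ES i)) (mul (E i) l))"
      by (rule PhiK[OF CV_ES[OF CV_add[OF T S]] K])
    also have "\<dots> = (\<Sum>i<N K. \<phi> (T (ES i)) (mul (E i) l) + \<phi> (S (ES i)) (mul (E i) l))"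
      using phi_add[OF CV_V[OF T] CV_V[OF S]] by simp
    also have "\<dots> = Phi T l + Phi S l"
      by (simp add: sum.distrib PhiK[OF CV_ES[OF T] K] PhiK[OF CV_ES[OF S] K])
    finally show ?thesis .
  qed
qed

lemma Phi_Bact: assumes T: "T \<in> CV" shows "Phi (Bact \<iota> m b T) = Bact \<iota> m b (Phi T)"
proof
  fix l show "Phi (Bact \<iota> m b T) l = Bact \<iota> m b (Phi T) l"
  proof (cases "l \<in> Bdual \<iota> m")
    case False then show ?thesis by (simp add: Phi_out Bact_def)
  next
    case True
    obtain K where K: "l \<in> Dk \<iota> m K" using Bdual_Dk[OF True] by blast
    have BES: "Bact \<iota> m b T (ES i) = T (mul b (ES i))" if "i < N K" for i
      using Dk_Bdual[OF F1[OF that]] by (simp add: Bact_def mul_def)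
    have BV: "\<forall>i. Bact \<iota> m b T (ES i) \<in> V" using CV_V[OF T] V_zero by (simp add: Bact_def)
    have "Phi (Bact \<iota> m b T) l = (\<Sum>i<N K. \<phi> (Bact \<iota> m b T (ES i)) (mul (E i) l))"
      by (rule PhiK[OF BV K])
    also have "\<dots> = (\<Sum>i<N K. \<phi> (T (mul b (ES i))) (mul (E i) l))"
      by (rule sum.cong[OF refl]) (simp add: BES)
    also have "\<dots> = (\<Sum>i<N K. \<phi> (T (ES i)) (mul (b * E i) l))" by (rule GL[OF T K])
    also have "\<dots> = Phi T (mul b l)"
      using PhiK[OF CV_ES[OF T] Dk_mul[OF K]] by (simp add: mul_mul)
    also have "\<dots> = Bact \<iota> m b (Phi T) l" using True by (simp add: Bact_def mul_def)
    finally show ?thesis .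
  qed
qed

lemma Phi_M: assumes T: "T \<in> CV" shows "Phi T \<in> M"
proof -
  have "Phi T \<in> BY \<iota> m M"
    unfolding BY_def PhiM_def using adm_E phi_M[OF CV_V[OF T]] by blast
  then show ?thesis using pc by (auto simp: pseudoclosed_def)
qed

lemma phi_D1: assumes y: "y \<in> V" and l: "l \<in> Dk \<iota> m 1" shows "\<phi> y l = sc (l 1) y"
proof -
  have "\<phi> y l = \<phi> y (\<lambda>b. l 1 * resid \<iota> m b)" using Dk1_form[OF base l] by simp
  also have "\<dots> = sc (l 1) (\<phi> y (resid \<iota> m))" by (rule ct_scale[OF X phi_ct[OF y] resid_D])
  also have "\<phi> y (resid \<iota> m) = y" using phi_proj[OF y] by (simp add: proj_def)
  finally show ?thesis .
qed

lemma LI: assumes U: "U \<in> CV" shows "(\<forall>l\<in>Dk \<iota> m K. Phi U l = 0) \<longrightarrow> (\<forall>l\<in>Dk \<iota> m K. U l = 0)"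
proof (induction K)
  case 0 show ?case using Dk0_form[OF base] ct_zero[OF X CV_ct[OF U]] by auto
next
  case (Suc K)
  show ?case
  proof (intro impI ballI)
    assume h: "\<forall>l\<in>Dk \<iota> m (Suc K). Phi U l = 0"
    then have "\<forall>l\<in>Dk \<iota> m K. Phi U l = 0" using Dk_mono[of K "Suc K"] by (meson le_SucI order_refl Dk_mono)
    then have UK: "\<forall>l\<in>Dk \<iota> m K. U l = 0" using Suc by (rule mp[rotated])
    fix l assume l: "l \<in> Dk \<iota> m (Suc K)"
    have "Phi U l = (\<Sum>i<N (Suc K). \<phi> (U (ES i)) (mul (E i) l))"
      by (rule PhiK[OF CV_ES[OF U] l])
    also have "\<dots> = (\<Sum>i<N (Suc K). sc (l (E i)) (U (ES i)))"
    proof (rule sum.cong[OF refl])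
      fix i assume "i \<in> {..<N (Suc K)}"
      show "\<phi> (U (ES i)) (mul (E i) l) = sc (l (E i)) (U (ES i))"
      proof (cases "i < N K")
        case True
        then have "U (ES i) = 0" using UK F1 by blast
        then show ?thesis by (simp add: phi_zero)
      next
        case False
        then have "E i \<in> mpow m K" using F2 by simp
        then have "mul (E i) l \<in> Dk \<iota> m 1" using mul_Dk_1[OF base _ l] by blast
        then show ?thesis using phi_D1[OF CV_V[OF U]] by (simp add: mul_def)
      qed
    qed
    also have "\<dots> = U (\<lambda>x. \<Sum>i<N (Suc K). l (E i) * ES i x)"
      using ct_sum[OF X CV_ct[OF U] finite_lessThan, where l=ES and K="Suc K" and c="\<lambda>i. l (E i)"] F1
      by simp
    also have "(\<lambda>x. \<Sum>i<N (Suc K). l (E i) * ES i x) = l"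
      using F5[OF l] by (simp add: mult.commute)
    finally show "U l = 0" using h l by simp
  qed
qed

lemma Phi_inj: assumes T: "T \<in> CV" and S: "S \<in> CV" and eq: "Phi T = Phi S" shows "T = S"
proof -
  define U where "U = (\<lambda>l. T l - S l)"
  have U: "U \<in> CV" unfolding U_def by (rule CV_diff[OF T S])
  have "(\<lambda>l. U l + S l) = T" unfolding U_def by simp
  then have "Phi T = (\<lambda>l. Phi U l + Phi S l)" using Phi_add[OF U S] by simp
  then have PU: "Phi U l = 0" for l using eq by (metis add_cancel_left_left)
  have "U l = 0" for l
  proof (cases "l \<in> Bdual \<iota> m")
    case True
    obtain K where K: "l \<in> Dk \<iota> m K" using Bdual_Dk[OF True] by blast
    then show ?thesis using LI[OF U, of K] PU by blast
  next
    case False then show ?thesis using ct_out[OF X CV_ct[OF U]] by blast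
  qed
  then show ?thesis unfolding U_def by (simp add: fun_eq_iff)
qed


lemma RL:
  assumes U: "U \<in> ctens \<iota> m sc" and U1: "\<forall>l\<in>Dk \<iota> m 1. U l = 0"
  shows "U \<in> mX \<iota> m sc"
proof -
  obtain k where k: "filterlim k at_top sequentially" "\<forall>i. N (k i) \<le> i" using adm_k by blast
  define b' where "b' i = (if i < N 1 then 0 else E i)" for i
  define k' where "k' i = max 1 (k i)" for i
  have adm: "adm m 1 b'"
    unfolding adm_def
  proof (intro exI[of _ k'] conjI allI)
    show "filterlim k' at_top sequentially"
      by (rule filterlim_at_top_mono[OF k(1)]) (simp add: k'_def)
    fix i show "1 \<le> k' i" by (simp add: k'_def)
    show "b' i \<in> mpow m (k' i)"
    proof (cases "i < N 1")
      case True then show ?thesis by (simp add: b'_def ideal_zero[OF mpow_ideal])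
    next
      case False
      then have "N (k' i) \<le> i" using k(2) by (simp add: k'_def max_def)
      then show ?thesis using False F2 by (simp add: b'_def)
    qed
  qed
  have y0: "\<forall>i. emb \<iota> m sc (U (ES i)) (\<lambda>_. 0) = 0" by (simp add: emb_def Bdual_0)
  have "U = csum \<iota> m b' (\<lambda>i. emb \<iota> m sc (U (ES i)))"
  proof
    fix l show "U l = csum \<iota> m b' (\<lambda>i. emb \<iota> m sc (U (ES i))) l"
    proof (cases "l \<in> Bdual \<iota> m")
      case False then show ?thesis by (simp add: csum_out ct_out[OF X U])
    next
      case True
      obtain K where K: "l \<in> Dk \<iota> m K" using Bdual_Dk[OF True] by blast
      have n0: "\<forall>i\<ge>N K. b' i \<in> mpow m K" using F2 by (simp add: b'_def ideal_zero[OF mpow_ideal])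
      have "csum \<iota> m b' (\<lambda>i. emb \<iota> m sc (U (ES i))) l = (\<Sum>i<N K. emb \<iota> m sc (U (ES i)) (mul (b' i) l))"
        by (rule csum_evalK[where y="\<lambda>i. emb \<iota> m sc (U (ES i))", OF K n0 y0])
      also have "\<dots> = (\<Sum>i<N K. sc (l (E i)) (U (ES i)))"
      proof (rule sum.cong[OF refl])
        fix i
        have "mul (b' i) l \<in> Bdual \<iota> m" using Dk_Bdual[OF Dk_mul[OF K]] .
        then have e: "emb \<iota> m sc (U (ES i)) (mul (b' i) l) = sc (l (b' i)) (U (ES i))"
          by (simp add: emb_def mul_def)
        show "emb \<iota> m sc (U (ES i)) (mul (b' i) l) = sc (l (E i)) (U (ES i))"
        proof (cases "i < N 1")
          case True
          then have "U (ES i) = 0" using U1 F1 by blast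
          then show ?thesis using e by simp
        next
          case False then show ?thesis using e by (simp add: b'_def)
        qed
      qed
      also have "\<dots> = U (\<lambda>x. \<Sum>i<N K. l (E i) * ES i x)"
        using ct_sum[OF X U finite_lessThan, where l=ES and K=K and c="\<lambda>i. l (E i)"] F1 by simp
      also have "(\<lambda>x. \<Sum>i<N K. l (E i) * ES i x) = l"
        using F5[OF K] by (simp add: mult.commute)
      finally show ?thesis by simp
    qed
  qed
  then show ?thesis unfolding mX_def mY_def using adm by blast
qed

lemma LE: "\<forall>x\<in>M. \<exists>T\<in>CV. \<forall>l\<in>Dk \<iota> m K. x l = Phi T l"
proof (induction K)
  case 0
  show ?case
  proof (intro ballI bexI[of _ "\<lambda>_. 0"])
    fix x l assume x: "x \<in> M" and l: "l \<in> Dk \<iota> m 0"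
    have "l = (\<lambda>_. 0)" by (rule Dk0_form[OF base l])
    then show "x l = Phi (\<lambda>_. 0) l"
      using ct_zero[OF X M_ct[OF x]] Phi_zero_fun[of "\<lambda>_. 0"] V_zero by simp
  qed (rule CV_zero)
next
  case (Suc K)
  show ?case
  proof
    fix x assume x: "x \<in> M"
    define y0 where "y0 = proj \<iota> m x"
    have y0V: "y0 \<in> V" unfolding y0_def using x by blast
    define x' where "x' = (\<lambda>l. x l - \<phi> y0 l)"
    have x'M: "x' \<in> M" unfolding x'_def by (rule M_diff[OF x phi_M[OF y0V]])
    have x'1: "\<forall>l\<in>Dk \<iota> m 1. x' l = 0"
    proof
      fix l assume l: "l \<in> Dk \<iota> m 1"
      have "x l = x (\<lambda>b. l 1 * resid \<iota> m b)" using Dk1_form[OF base l] by simp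
      also have "\<dots> = sc (l 1) y0" unfolding y0_def proj_def by (rule ct_scale[OF X M_ct[OF x] resid_D])
      finally show "x' l = 0" unfolding x'_def using phi_D1[OF y0V l] by simp
    qed
    have "x' \<in> mX \<iota> m sc" by (rule RL[OF M_ct[OF x'M] x'1])
    then have "x' \<in> mY \<iota> m M" using qf x'M by (auto simp: quasi_flat_def)
    then obtain b y where x'eq: "x' = csum \<iota> m b y" and b: "adm m 1 b" and yM: "\<forall>i. y i \<in> M"
      unfolding mY_def by blast
    have "\<forall>i. \<exists>T. T \<in> CV \<and> (\<forall>l\<in>Dk \<iota> m K. y i l = Phi T l)" using Suc yM by blast
    then obtain Tf where Tf: "\<forall>i. Tf i \<in> CV \<and> (\<forall>l\<in>Dk \<iota> m K. y i l = Phi (Tf i) l)"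
      by metis
    have TfCV: "\<forall>i. Tf i \<in> CV" using Tf by blast
    define T where "T = (\<lambda>l. emb \<iota> m sc y0 l + csum \<iota> m b Tf l)"
    have TCV: "T \<in> CV" unfolding T_def by (rule CV_add[OF CV_emb[OF y0V] csum_CV[OF b TfCV]])
    have bm: "b j \<in> m" for j
    proof -
      obtain k where "\<forall>i. 1 \<le> k i \<and> b i \<in> mpow m (k i)" using b by (auto simp: adm_def)
      then have "b j \<in> mpow m 1" using mpow_antimono by blast
      then show ?thesis using mpow1[OF m_ideal[OF base]] by simp
    qed
    have "\<forall>l\<in>Dk \<iota> m (Suc K). x l = Phi T l"
    proof
      fix l assume l: "l \<in> Dk \<iota> m (Suc K)"
      obtain n0 where n0: "\<forall>i\<ge>n0. b i \<in> mpow m (Suc K)" using adm_tail[OF b] by blast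
      have "Phi T l = Phi (emb \<iota> m sc y0) l + Phi (csum \<iota> m b Tf) l"
        unfolding T_def Phi_add[OF CV_emb[OF y0V] csum_CV[OF b TfCV]] ..
      also have "Phi (emb \<iota> m sc y0) l = \<phi> y0 l" using Phi_emb[OF y0V] by simp
      also have "Phi (csum \<iota> m b Tf) l = csum \<iota> m b (\<lambda>i. Phi (Tf i)) l"
        using KL[OF b TfCV] by simp
      also have "\<dots> = (\<Sum>j<n0. Phi (Tf j) (mul (b j) l))"
        by (rule csum_evalK[OF l n0]) (use Phi_zero_fun CV_ES TfCV in blast)
      also have "\<dots> = (\<Sum>j<n0. y j (mul (b j) l))"
      proof (rule sum.cong[OF refl])
        fix j
        have "mul (b j) l \<in> Dk \<iota> m K" by (rule mul_Dk_down[OF base bm l])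
        then show "Phi (Tf j) (mul (b j) l) = y j (mul (b j) l)" using Tf by simp
      qed
      also have "\<dots> = x' l"
        unfolding x'eq by (rule csum_evalK[OF l n0, symmetric]) (use ct_zero[OF X M_ct] yM in blast)
      finally show "x l = Phi T l" unfolding x'_def by simp
    qed
    then show "\<exists>T\<in>CV. \<forall>l\<in>Dk \<iota> m (Suc K). x l = Phi T l" using TCV by blast
  qed
qed

lemma Phi_surj: assumes x: "x \<in> M" shows "\<exists>T\<in>CV. Phi T = x"
proof -
  have "\<forall>K. \<exists>T. T \<in> CV \<and> (\<forall>l\<in>Dk \<iota> m K. x l = Phi T l)" using LE x by blast
  then obtain TK where TK: "\<forall>K. TK K \<in> CV \<and> (\<forall>l\<in>Dk \<iota> m K. x l = Phi (TK K) l)" by metis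
  have TKCV: "TK K \<in> CV" for K using TK by blast
  have compat: "TK K l = TK K' l" if KK: "K \<le> K'" and l: "l \<in> Dk \<iota> m K" for K K' l
  proof -
    define U where "U = (\<lambda>l. TK K l - TK K' l)"
    have U: "U \<in> CV" unfolding U_def by (rule CV_diff[OF TKCV TKCV])
    have "(\<lambda>l. U l + TK K' l) = TK K" unfolding U_def by simp
    then have PK: "Phi (TK K) = (\<lambda>l. Phi U l + Phi (TK K') l)" using Phi_add[OF U TKCV[of K']] by simp
    have "\<forall>l\<in>Dk \<iota> m K. Phi U l = 0"
    proof
      fix l' assume l': "l' \<in> Dk \<iota> m K"
      then have "l' \<in> Dk \<iota> m K'" using Dk_mono[OF KK] by blast
      then have "Phi (TK K') l' = x l'" using TK by simp
      moreover have "Phi (TK K) l' = x l'" using TK l' by simp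
      ultimately show "Phi U l' = 0" using PK by (metis add_cancel_left_left)
    qed
    then have "U l = 0" using LI[OF U, of K] l by blast
    then show ?thesis unfolding U_def by simp
  qed
  define \<kappa> where "\<kappa> l = (LEAST K. l \<in> Dk \<iota> m K)" for l
  define T where "T l = (if l \<in> Bdual \<iota> m then TK (\<kappa> l) l else 0)" for l
  have TT: "T l = TK K l" if l: "l \<in> Dk \<iota> m K" for l K
  proof -
    have "\<kappa> l \<le> K" unfolding \<kappa>_def by (rule Least_le) (rule l)
    moreover have "l \<in> Dk \<iota> m (\<kappa> l)" unfolding \<kappa>_def by (rule LeastI) (rule l)
    ultimately have "TK (\<kappa> l) l = TK K l" by (rule compat)
    then show ?thesis using Dk_Bdual[OF l] by (simp add: T_def)
  qed
  have TCV: "T \<in> CV"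
    unfolding ctens_sub_def ctens_def mem_Collect_eq
  proof (intro conjI ballI allI impI)
    fix l l' assume l: "l \<in> Bdual \<iota> m" and l': "l' \<in> Bdual \<iota> m"
    obtain K where K: "l \<in> Dk \<iota> m K" "l' \<in> Dk \<iota> m K" using common_K[OF l l'] by blast
    show "T (\<lambda>b. l b + l' b) = T l + T l'"
      using TT[OF Dk_add[OF K]] TT[OF K(1)] TT[OF K(2)] ct_add[OF X CV_ct[OF TKCV] l l'] by simp
  next
    fix c l assume l: "l \<in> Bdual \<iota> m"
    obtain K where K: "l \<in> Dk \<iota> m K" using Bdual_Dk[OF l] by blast
    show "T (\<lambda>b. c * l b) = sc c (T l)"
      using TT[OF Dk_scale[OF K]] TT[OF K] ct_scale[OF X CV_ct[OF TKCV] l] by simp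
  next
    fix l assume "l \<notin> Bdual \<iota> m" then show "T l = 0" by (simp add: T_def)
  next
    fix l show "T l \<in> V" using CV_V[OF TKCV] V_zero by (simp add: T_def)
  qed
  have "Phi T = x"
  proof
    fix l show "Phi T l = x l"
    proof (cases "l \<in> Bdual \<iota> m")
      case False then show ?thesis using Phi_out ct_out[OF X M_ct[OF x] False] by simp
    next
      case True
      obtain K where K: "l \<in> Dk \<iota> m K" using Bdual_Dk[OF True] by blast
      have "Phi T l = (\<Sum>i<N K. \<phi> (T (ES i)) (mul (E i) l))" by (rule PhiK[OF CV_ES[OF TCV] K])
      also have "\<dots> = (\<Sum>i<N K. \<phi> (TK K (ES i)) (mul (E i) l))"
        by (rule sum.cong[OF refl]) (simp add: TT[OF F1])
      also have "\<dots> = Phi (TK K) l" by (rule PhiK[OF CV_ES[OF TKCV] K, symmetric])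
      also have "\<dots> = x l" using TK K by simp
      finally show ?thesis .
    qed
  qed
  then show ?thesis using TCV by blast
qed

lemma main_result:
  "(\<forall>b y. adm m 0 b \<and> (\<forall>i. y i \<in> V) \<longrightarrow>
                 Phi (csum \<iota> m b (\<lambda>i. emb \<iota> m sc (y i))) = csum \<iota> m b (\<lambda>i. \<phi> (y i)))
            \<and> (\<forall>T\<in>CV. \<forall>S\<in>CV. Phi (\<lambda>l. T l + S l) = (\<lambda>l. Phi T l + Phi S l))
            \<and> (\<forall>b. \<forall>T\<in>CV. Phi (Bact \<iota> m b T) = Bact \<iota> m b (Phi T))
            \<and> bij_betw Phi CV M"
proof (intro conjI allI impI ballI)
  fix b :: "nat \<Rightarrow> 'b" and y :: "nat \<Rightarrow> 'x" assume h: "adm m 0 b \<and> (\<forall>i. y i \<in> V)"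
  have "\<forall>i. emb \<iota> m sc (y i) \<in> CV" using h CV_emb by blast
  then have "Phi (csum \<iota> m b (\<lambda>i. emb \<iota> m sc (y i))) = csum \<iota> m b (\<lambda>i. Phi (emb \<iota> m sc (y i)))"
    using h by (intro KL[where j=0 and b=b and S="\<lambda>i. emb \<iota> m sc (y i)"]) simp_all
  also have "(\<lambda>i. Phi (emb \<iota> m sc (y i))) = (\<lambda>i. \<phi> (y i))" using Phi_emb h by simp
  finally show "Phi (csum \<iota> m b (\<lambda>i. emb \<iota> m sc (y i))) = csum \<iota> m b (\<lambda>i. \<phi> (y i))" .
next
  fix T S assume "T \<in> CV" "S \<in> CV" then show "Phi (\<lambda>l. T l + S l) = (\<lambda>l. Phi T l + Phi S l)" by (rule Phi_add)
next
  fix b T assume "T \<in> CV" then show "Phi (Bact \<iota> m b T) = Bact \<iota> m b (Phi T)" by (rule Phi_Bact)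
next
  show "bij_betw Phi CV M"
    unfolding bij_betw_def
  proof
    show "inj_on Phi CV" by (rule inj_onI) (rule Phi_inj)
    show "Phi ` CV = M" using Phi_M Phi_surj by blast
  qed
qed

end

theorem lemma2p28:
  fixes \<iota> :: "complex \<Rightarrow> 'b::comm_ring_1" and m :: "'b set"
    and sc :: "complex \<Rightarrow> 'x::ab_group_add \<Rightarrow> 'x"
    and M :: "(('b \<Rightarrow> complex) \<Rightarrow> 'x) set"
    and \<phi> :: "'x \<Rightarrow> (('b \<Rightarrow> complex) \<Rightarrow> 'x)"
  assumes base: "deformation_base \<iota> m"
    and X: "vector_space sc"
    and sub: "B_submodule \<iota> m sc M"
    and qf: "quasi_flat \<iota> m sc M"
    and pc: "pseudoclosed \<iota> m M"
    and sect: "\<forall>y\<in>proj \<iota> m ` M. \<phi> y \<in> M \<and> proj \<iota> m (\<phi> y) = y"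
    and lin_add: "\<forall>y\<in>proj \<iota> m ` M. \<forall>z\<in>proj \<iota> m ` M. \<phi> (y + z) = (\<lambda>l. \<phi> y l + \<phi> z l)"
    and lin_scale: "\<forall>c. \<forall>y\<in>proj \<iota> m ` M. \<phi> (sc c y) = (\<lambda>l. sc c (\<phi> y l))"
  shows "\<exists>\<Phi>. (\<forall>b y. adm m 0 b \<and> (\<forall>i. y i \<in> proj \<iota> m ` M) \<longrightarrow>
                 \<Phi> (csum \<iota> m b (\<lambda>i. emb \<iota> m sc (y i))) = csum \<iota> m b (\<lambda>i. \<phi> (y i)))
            \<and> (\<forall>T\<in>ctens_sub \<iota> m sc (proj \<iota> m ` M). \<forall>S\<in>ctens_sub \<iota> m sc (proj \<iota> m ` M).
                 \<Phi> (\<lambda>l. T l + S l) = (\<lambda>l. \<Phi> T l + \<Phi> S l))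
            \<and> (\<forall>b. \<forall>T\<in>ctens_sub \<iota> m sc (proj \<iota> m ` M). \<Phi> (Bact \<iota> m b T) = Bact \<iota> m b (\<Phi> T))
            \<and> bij_betw \<Phi> (ctens_sub \<iota> m sc (proj \<iota> m ` M)) M"
proof -
  obtain E ES N where fr: "frame \<iota> m E ES N" using frame_exists[OF base] by blast
  show ?thesis
    by (rule exI[of _ "PhiM \<iota> m \<phi> E ES"], rule main_result[OF base X sub qf pc sect lin_add lin_scale fr])
qed

end
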